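(* Let $p>1$, $a\in\mathbb{C}$ with $0<|a|<1$, $M\in\mathbb{N}$ (a positive integer), and $\varphi(z)=az^M$. Then the spectrum of $D_\varphi$ acting on $S^p$ is $$\sigma(D_\varphi)=\begin{cases}\{0,2a\} & \text{if } M=2,\\ \{0\} & \text{otherwise.}\end{cases}$$
   Context: $\mathbb{D}$ is the open unit disk. For $p>1$, $H^p$ is the Hardy space on $\mathbb{D}$ with norm $\|g\|_{H^p}^p=\sup_{0<r<1}\int_0^{2\pi}|g(re^{i\theta})|^p\frac{d\theta}{2\pi}$; $S^p$ is the space of analytic $f$ on $\mathbb{D}$ with $f'\in H^p$, normed by $\|f\|_{S^p}=|f(0)|+\|f'\|_{H^p}$. $D_\varphi f=f'\circ\varphi$. *)

theory Defs
  imports "HOL-Analysis.Analysis"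
begin

text \<open>Functions on the unit disk are represented as functions complex => complex
  normalised to be 0 outside the open unit disk, so that distinct elements of the
  spaces are distinct HOL functions.\<close>

definition disk_fun :: "(complex \<Rightarrow> complex) \<Rightarrow> bool" where
  "disk_fun f \<longleftrightarrow> f holomorphic_on ball 0 1 \<and> (\<forall>z. z \<notin> ball 0 1 \<longrightarrow> f z = 0)"

definition integral_mean :: "real \<Rightarrow> (complex \<Rightarrow> complex) \<Rightarrow> real \<Rightarrow> real" where
  "integral_mean p g r =
     integral {0..2*pi} (\<lambda>t. cmod (g (complex_of_real r * exp (\<i> * complex_of_real t))) powr p) / (2*pi)"

definition hardy :: "real \<Rightarrow> (complex \<Rightarrow> complex) set" where
  "hardy p = {g. g holomorphic_on ball 0 1 \<and> bdd_above (integral_mean p g ` {0<..<1})}"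

definition hardy_norm :: "real \<Rightarrow> (complex \<Rightarrow> complex) \<Rightarrow> real" where
  "hardy_norm p g = (SUP r\<in>{0<..<1}. integral_mean p g r) powr (1/p)"

definition Sp :: "real \<Rightarrow> (complex \<Rightarrow> complex) set" where
  "Sp p = {f. disk_fun f \<and> deriv f \<in> hardy p}"

definition Sp_norm :: "real \<Rightarrow> (complex \<Rightarrow> complex) \<Rightarrow> real" where
  "Sp_norm p f = cmod (f 0) + hardy_norm p (deriv f)"

definition Dphi :: "(complex \<Rightarrow> complex) \<Rightarrow> (complex \<Rightarrow> complex) \<Rightarrow> (complex \<Rightarrow> complex)" where
  "Dphi \<phi> f = (\<lambda>z. if z \<in> ball 0 1 then deriv f (\<phi> z) else 0)"

text \<open>Spectrum of D_phi on S^p: lambda such that D_phi - lambda I is not invertible in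
  the bounded operators on S^p, i.e. it is not a bijection of S^p with bounded inverse
  (bounded inverse = bounded below).\<close>
definition Dphi_spectrum :: "real \<Rightarrow> (complex \<Rightarrow> complex) \<Rightarrow> complex set" where
  "Dphi_spectrum p \<phi> = {c. \<not> (bij_betw (\<lambda>f z. Dphi \<phi> f z - c * f z) (Sp p) (Sp p) \<and>
       (\<exists>C. \<forall>f\<in>Sp p. Sp_norm p f \<le> C * Sp_norm p (\<lambda>z. Dphi \<phi> f z - c * f z)))}"

end

theory Submission
  imports Defs "HOL-Complex_Analysis.Complex_Analysis"
begin


definition cf :: "(complex \<Rightarrow> complex) \<Rightarrow> nat \<Rightarrow> complex" where
  "cf f n = (deriv ^^ n) f 0 / fact n"

lemma cf_deriv: "cf (deriv f) n = of_nat (Suc n) * cf f (Suc n)"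
proof -
  have "(deriv ^^ n) (deriv f) = (deriv ^^ Suc n) f"
    by (simp add: funpow_Suc_right del: funpow.simps)
  then show ?thesis unfolding cf_def
    by (simp del: funpow.simps of_nat_Suc add: fact_Suc field_simps)
qed

lemma cf_ps:
  assumes "f holomorphic_on ball 0 1" "z \<in> ball 0 1"
  shows "(\<lambda>n. cf f n * z ^ n) sums f z"
  using holomorphic_power_series[OF assms] unfolding cf_def by simp

lemma cf_uniq:
  assumes r: "r > 0" and S: "\<And>z. z \<in> ball 0 r \<Longrightarrow> (\<lambda>n. u n * z ^ n) sums f z"
  shows "cf f n = u n"
proof -
  define F where "F = Abs_fps u"
  have "fps_conv_radius F \<ge> ereal r"
    unfolding fps_conv_radius_def F_def fps_nth_Abs_fps
  proof (rule conv_radius_geI_ex')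
    fix s :: real assume "0 < s" "ereal s < ereal r"
    then have "complex_of_real s \<in> ball 0 r" by auto
    from S[OF this] show "summable (\<lambda>n. u n * complex_of_real s ^ n)"
      by (simp add: sums_iff)
  qed
  then have rad: "fps_conv_radius F > 0" using r
    by (meson ereal_less(2) less_le_trans)
  have ev: "eventually (\<lambda>z. eval_fps F z = f z) (nhds 0)"
  proof -
    have "eventually (\<lambda>z. z \<in> ball 0 r) (nhds (0::complex))"
      using r by (intro eventually_nhds_in_open) auto
    then show ?thesis
      by eventually_elim (use S in \<open>auto simp: eval_fps_def F_def sums_iff\<close>)
  qed
  have "f has_fps_expansion F" unfolding has_fps_expansion_def using rad ev by auto
  from fps_nth_fps_expansion[OF this, of n] show ?thesis
    unfolding cf_def F_def by simp
qed


definition avg1 :: "(complex \<Rightarrow> complex) \<Rightarrow> real \<Rightarrow> real" where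
  "avg1 h r = integral {0..2*pi} (\<lambda>t. cmod (h (complex_of_real r * exp (\<i> * complex_of_real t)))) / (2*pi)"

lemma cont_circle:
  assumes "h holomorphic_on ball 0 1" "0 \<le> r" "r < 1"
  shows "continuous_on S (\<lambda>t::real. h (complex_of_real r * exp (\<i> * complex_of_real t)))"
proof -
  have "continuous_on (ball 0 1) h" using assms(1) holomorphic_on_imp_continuous_on by blast
  moreover have "(\<lambda>t::real. complex_of_real r * exp (\<i> * complex_of_real t)) ` S \<subseteq> ball 0 1"
    using assms by (auto simp: norm_mult)
  moreover have "continuous_on S (\<lambda>t::real. complex_of_real r * exp (\<i> * complex_of_real t))"
    by (intro continuous_intros)
  ultimately show ?thesis
    using continuous_on_compose2[of "ball 0 1" h S "\<lambda>t::real. complex_of_real r * exp (\<i> * complex_of_real t)"]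
    by blast
qed

lemma stretch01:
  assumes "continuous_on {0..2*pi} F"
  shows "integral {0..1} (\<lambda>x. F (2*pi*x)) = integral {0..2*pi} F / (2*pi)"
proof -
  have "(F has_integral integral {0..2*pi} F) {0..2*pi}"
    using assms integrable_continuous_interval by blast
  from has_integral_stretch_real[OF this, of "2*pi"]
  have "((\<lambda>x. F (2*pi * x)) has_integral (1 / \<bar>2*pi\<bar>) *\<^sub>R integral {0..2*pi} F) ((\<lambda>x. x / (2*pi)) ` {0..2*pi})"
    by simp
  moreover have "(\<lambda>x. x / (2*pi)) ` {0..2*pi} = {0..1}"
  proof
    show "(\<lambda>x. x / (2*pi)) ` {0..2*pi} \<subseteq> {0..1}" by (auto simp: field_simps)
    show "{0..1} \<subseteq> (\<lambda>x. x / (2*pi)) ` {0..2*pi}"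
    proof
      fix y :: real assume "y \<in> {0..1}"
      then show "y \<in> (\<lambda>x. x / (2*pi)) ` {0..2*pi}"
        by (intro image_eqI[of _ _ "2*pi*y"]) (auto simp: field_simps)
    qed
  qed
  ultimately show ?thesis by (simp add: integral_unique divide_simps)
qed

lemma CE:
  assumes hol: "h holomorphic_on ball 0 1" and r: "0 < r" "r < 1"
  shows "cmod (cf h m) * r ^ m \<le> avg1 h r"
proof -
  have contf: "continuous_on (cball 0 r) h"
    by (rule continuous_on_subset[OF holomorphic_on_imp_continuous_on[OF hol]]) (use r in auto)
  have holr: "h holomorphic_on ball 0 r" by (rule holomorphic_on_subset[OF hol]) (use r in auto)
  have "((\<lambda>u. h u / (u - 0) ^ Suc m) has_contour_integral (2 * pi * \<i>) / fact m * (deriv ^^ m) h 0) (circlepath 0 r)"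
    by (rule Cauchy_has_contour_integral_higher_derivative_circlepath[OF contf holr]) (use r in auto)
  then have HI: "((\<lambda>x. h (circlepath 0 r x) / (circlepath 0 r x) ^ Suc m * vector_derivative (circlepath 0 r) (at x within {0..1}))
      has_integral (2 * pi * \<i>) / fact m * (deriv ^^ m) h 0) {0..1}"
    unfolding has_contour_integral_def by simp
  define H where "H = (\<lambda>t::real. cmod (h (complex_of_real r * exp (\<i> * complex_of_real t))))"
  have contH: "continuous_on S H" for S
    unfolding H_def by (intro continuous_on_norm cont_circle[OF hol]) (use r in auto)
  have eq: "norm (h (circlepath 0 r x) / (circlepath 0 r x) ^ Suc m * vector_derivative (circlepath 0 r) (at x within {0..1}))
      = 2 * pi / r ^ m * H (2*pi*x)" if x: "x \<in> {0..1}" for x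
  proof -
    define e where "e = exp (\<i> * complex_of_real (2*pi*x))"
    have ee: "exp (2 * complex_of_real pi * \<i> * complex_of_real x) = e"
      unfolding e_def by (simp add: algebra_simps)
    have vd: "vector_derivative (circlepath 0 r) (at x within {0..1}) = 2 * pi * \<i> * r * e"
      using x ee by (simp add: vector_derivative_circlepath01)
    have cp: "circlepath 0 r x = complex_of_real r * e" unfolding circlepath ee by simp
    have n1: "cmod e = 1" unfolding e_def by simp
    have "norm (h (circlepath 0 r x) / (circlepath 0 r x) ^ Suc m * vector_derivative (circlepath 0 r) (at x within {0..1}))
       = cmod (h (complex_of_real r * e)) / r ^ Suc m * (2 * pi * r)"
      unfolding vd cp using r
      by (simp only: norm_mult norm_divide norm_power n1 norm_of_real) (simp add: abs_of_pos)
    also have "\<dots> = 2 * pi / r ^ m * H (2*pi*x)"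
      unfolding H_def e_def[symmetric] using r by (simp add: field_simps)
    finally show ?thesis .
  qed
  have intg: "(\<lambda>x. norm (h (circlepath 0 r x) / (circlepath 0 r x) ^ Suc m * vector_derivative (circlepath 0 r) (at x within {0..1}))) integrable_on {0..1}"
  proof -
    have c1: "continuous_on {0..1} (\<lambda>x. H (2*pi*x))"
      by (rule continuous_on_compose2[OF contH[of UNIV]]) (auto intro: continuous_on_mult_left continuous_on_id)
    have "(\<lambda>x. 2 * pi / r ^ m * H (2*pi*x)) integrable_on {0..1}"
      by (rule integrable_continuous_interval, rule continuous_on_mult_left, rule c1)
    then show ?thesis by (rule integrable_eq) (use eq in simp)
  qed
  have "norm ((2 * pi * \<i>) / fact m * (deriv ^^ m) h 0) \<le>
       integral {0..1} (\<lambda>x. norm (h (circlepath 0 r x) / (circlepath 0 r x) ^ Suc m * vector_derivative (circlepath 0 r) (at x within {0..1})))"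
    using integral_norm_bound_integral[OF has_integral_integrable[OF HI] intg] integral_unique[OF HI] by auto
  also have "\<dots> = integral {0..1} (\<lambda>x. 2 * pi / r ^ m * H (2*pi*x))"
    by (rule integral_cong) (use eq in auto)
  also have "\<dots> = 2 * pi / r ^ m * integral {0..1} (\<lambda>x. H (2*pi*x))" by simp
  also have "integral {0..1} (\<lambda>x. H (2*pi*x)) = avg1 h r"
    unfolding avg1_def H_def[symmetric] by (rule stretch01[OF contH])
  finally have L: "norm ((2 * pi * \<i>) / fact m * (deriv ^^ m) h 0) \<le> 2 * pi / r ^ m * avg1 h r" .
  have nn: "norm ((2 * pi * \<i>) / fact m * (deriv ^^ m) h 0) = 2 * pi * (cmod ((deriv ^^ m) h 0) / fact m)"
    by (simp add: norm_mult norm_divide)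
  have "2 * pi * (cmod ((deriv ^^ m) h 0) / fact m) \<le> 2 * pi * (avg1 h r / r ^ m)"
    using L unfolding nn by simp
  then have "cmod ((deriv ^^ m) h 0) / fact m \<le> avg1 h r / r ^ m"
  proof (rule mult_left_le_imp_le)
    show "0 < 2 * pi" by simp
  qed
  then have "cmod ((deriv ^^ m) h 0) / fact m * r ^ m \<le> avg1 h r"
    using r by (simp add: pos_le_divide_eq)
  then show ?thesis unfolding cf_def by (simp add: norm_divide)
qed


lemma imean_cont:
  assumes "h holomorphic_on ball 0 1" "0 \<le> r" "r < 1" "p > 0"
  shows "continuous_on S (\<lambda>t::real. cmod (h (complex_of_real r * exp (\<i> * complex_of_real t))) powr p)"
  by (rule continuous_on_powr') (auto intro!: continuous_on_norm cont_circle[OF assms(1-3)] simp: assms(4))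

lemma imean_nonneg:
  assumes "h holomorphic_on ball 0 1" "0 \<le> r" "r < 1" "p > 0"
  shows "integral_mean p h r \<ge> 0"
  unfolding integral_mean_def
  by (intro divide_nonneg_pos integral_nonneg integrable_continuous_interval imean_cont[OF assms]) auto

lemma hardy_sup:
  assumes h: "h \<in> hardy p" and p: "p > 0" and r: "0 < r" "r < 1"
  shows "integral_mean p h r \<le> hardy_norm p h powr p" and "hardy_norm p h \<ge> 0"
proof -
  have hol: "h holomorphic_on ball 0 1" and bdd: "bdd_above (integral_mean p h ` {0<..<1})"
    using h unfolding hardy_def by auto
  have le: "integral_mean p h r \<le> (SUP r\<in>{0<..<1}. integral_mean p h r)"
    by (rule cSUP_upper[OF _ bdd]) (use r in auto)
  have nn: "0 \<le> (SUP r\<in>{0<..<1}. integral_mean p h r)"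
    using le imean_nonneg[OF hol _ r(2) p] r by linarith
  have "hardy_norm p h powr p = (SUP r\<in>{0<..<1}. integral_mean p h r)"
    unfolding hardy_norm_def using p nn by (simp add: powr_powr)
  then show "integral_mean p h r \<le> hardy_norm p h powr p" using le by simp
  show "hardy_norm p h \<ge> 0" unfolding hardy_norm_def by simp
qed

lemma young1:
  fixes x t p :: real
  assumes "x \<ge> 0" "t > 0" "p \<ge> 1"
  shows "x \<le> t + t powr (1 - p) * x powr p"
proof (cases "x \<le> t")
  case True then show ?thesis using assms by (simp add: add_increasing2)
next
  case False
  then have xt: "x / t \<ge> 1" using assms by simp
  have "(x / t) powr 1 \<le> (x / t) powr p" using xt assms by (intro powr_mono) auto
  moreover have "(x / t) powr 1 = x / t" using xt by (intro powr_one) simp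
  ultimately have "x / t \<le> (x / t) powr p" by simp
  also have "\<dots> = x powr p / t powr p" using assms by (simp add: powr_divide)
  finally have "x \<le> t * (x powr p / t powr p)" using assms by (simp add: field_simps)
  also have "\<dots> = t powr (1 - p) * x powr p"
    using assms by (simp add: powr_diff field_simps)
  finally show ?thesis using assms by simp
qed

lemma jensen:
  assumes h: "h \<in> hardy p" and p: "p > 1" and r: "0 < r" "r < 1"
  shows "avg1 h r \<le> 2 * hardy_norm p h"
proof -
  have hol: "h holomorphic_on ball 0 1" using h unfolding hardy_def by auto
  define N where "N = hardy_norm p h"
  have N0: "N \<ge> 0" using hardy_sup(2)[OF h _ r] p N_def by simp
  have IM: "integral_mean p h r \<le> N powr p" using hardy_sup(1)[OF h _ r] p N_def by simp
  define F where "F = (\<lambda>t::real. cmod (h (complex_of_real r * exp (\<i> * complex_of_real t))))"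
  have cF: "continuous_on {0..2*pi} F" unfolding F_def
    by (intro continuous_on_norm cont_circle[OF hol]) (use r in auto)
  have cFp: "continuous_on {0..2*pi} (\<lambda>x. F x powr p)" unfolding F_def
    by (rule imean_cont[OF hol]) (use r p in auto)
  have key: "avg1 h r \<le> t + t powr (1 - p) * N powr p" if t: "t > 0" for t
  proof -
    have "integral {0..2*pi} F \<le> integral {0..2*pi} (\<lambda>x. t + t powr (1 - p) * F x powr p)"
      by (intro integral_le integrable_continuous_interval cF continuous_intros cFp)
         (auto intro!: young1 simp: F_def t p less_imp_le)
    also have "\<dots> = 2 * pi * t + t powr (1 - p) * integral {0..2*pi} (\<lambda>x. F x powr p)"
      using integrable_continuous_interval[OF continuous_on_mult_left[OF cFp, of "t powr (1 - p)"]]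
      by (subst integral_add) auto
    finally have "integral {0..2*pi} F / (2*pi) \<le> t + t powr (1 - p) * (integral {0..2*pi} (\<lambda>x. F x powr p) / (2*pi))"
      by (simp add: field_simps)
    also have "integral {0..2*pi} (\<lambda>x. F x powr p) / (2*pi) = integral_mean p h r"
      unfolding integral_mean_def F_def by simp
    finally have "avg1 h r \<le> t + t powr (1 - p) * integral_mean p h r"
      unfolding avg1_def F_def by simp
    also have "\<dots> \<le> t + t powr (1 - p) * N powr p"
      using IM by (intro add_left_mono mult_left_mono) auto
    finally show ?thesis .
  qed
  show ?thesis
  proof (cases "N > 0")
    case True
    have "N powr (1 - p) * N powr p = N" using True by (simp add: powr_add[symmetric])
    then show ?thesis using key[OF True] N_def by simp
  next
    case False
    then have N: "N = 0" using N0 by simp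
    have "avg1 h r \<le> 0"
    proof (rule field_le_epsilon)
      fix e :: real assume "e > 0"
      then show "avg1 h r \<le> 0 + e" using key[of e] N p by simp
    qed
    then show ?thesis using N N_def by simp
  qed
qed

lemma coeff_hardy:
  assumes h: "h \<in> hardy p" and p: "p > 1" and r: "0 < r" "r < 1"
  shows "cmod (cf h m) * r ^ m \<le> 2 * hardy_norm p h"
  using CE[of h r m] jensen[OF assms] h r unfolding hardy_def by auto


lemma pw_dom:
  fixes x y S k p :: real
  assumes "x \<ge> 0" "y \<ge> 0" "S \<ge> 0" "k \<ge> 0" "p > 0" "x \<le> S + k * y"
  shows "x powr p \<le> 2 powr p * (S powr p + (k * y) powr p)"
proof -
  define m where "m = max S (k * y)"
  have "x \<le> 2 * m" using assms unfolding m_def by linarith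
  then have "x powr p \<le> (2 * m) powr p" using assms by (intro powr_mono2) auto
  also have "\<dots> = 2 powr p * m powr p" using assms by (simp add: powr_mult m_def)
  also have "m powr p \<le> S powr p + (k * y) powr p"
    unfolding m_def by (cases "S \<le> k * y") (auto simp: max_def)
  then have "2 powr p * m powr p \<le> 2 powr p * (S powr p + (k * y) powr p)"
    by (intro mult_left_mono) auto
  finally show ?thesis .
qed

lemma hardy_dom:
  assumes p: "p > 1" and u: "u holomorphic_on ball 0 1" and v: "v \<in> hardy p"
    and S: "S \<ge> 0" and k: "k \<ge> 0"
    and le: "\<And>z. z \<in> ball 0 1 \<Longrightarrow> cmod (u z) \<le> S + k * cmod (v z)"
  shows "u \<in> hardy p" "hardy_norm p u \<le> 4 * (S + k * hardy_norm p v)"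
proof -
  have hv: "v holomorphic_on ball 0 1" using v unfolding hardy_def by auto
  define N where "N = hardy_norm p v"
  have N0: "N \<ge> 0" using hardy_sup(2)[OF v, of "1/2"] p N_def by simp
  define Q where "Q = 2 powr p * (S powr p + (k * N) powr p)"
  have IM: "integral_mean p u r \<le> Q" if r: "0 < r" "r < 1" for r
  proof -
    define F where "F = (\<lambda>t::real. cmod (u (complex_of_real r * exp (\<i> * complex_of_real t))))"
    define G where "G = (\<lambda>t::real. cmod (v (complex_of_real r * exp (\<i> * complex_of_real t))))"
    have cF: "continuous_on {0..2*pi} (\<lambda>x. F x powr p)" unfolding F_def
      by (rule imean_cont[OF u]) (use r p in auto)
    have cG: "continuous_on {0..2*pi} (\<lambda>x. G x powr p)" unfolding G_def
      by (rule imean_cont[OF hv]) (use r p in auto)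
    have pt: "F x powr p \<le> 2 powr p * (S powr p + k powr p * G x powr p)" for x
    proof -
      have "complex_of_real r * exp (\<i> * complex_of_real x) \<in> ball 0 1"
        using r by (simp add: norm_mult)
      from le[OF this] have "F x \<le> S + k * G x" unfolding F_def G_def .
      from pw_dom[OF _ _ S k _ this] p show ?thesis
        by (simp add: F_def G_def powr_mult k)
    qed
    have "integral {0..2*pi} (\<lambda>x. F x powr p) \<le> integral {0..2*pi} (\<lambda>x. 2 powr p * (S powr p + k powr p * G x powr p))"
      by (intro integral_le integrable_continuous_interval cF continuous_intros cG pt) auto
    also have "\<dots> = 2 powr p * integral {0..2*pi} (\<lambda>x. S powr p + k powr p * G x powr p)"
      by simp
    also have "integral {0..2*pi} (\<lambda>x. S powr p + k powr p * G x powr p) = 2 * pi * S powr p + k powr p * integral {0..2*pi} (\<lambda>x. G x powr p)"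
      using integrable_continuous_interval[OF continuous_on_mult_left[OF cG, of "k powr p"]]
      by (subst integral_add) auto
    finally have "integral {0..2*pi} (\<lambda>x. F x powr p) / (2*pi) \<le>
        2 powr p * (S powr p + k powr p * (integral {0..2*pi} (\<lambda>x. G x powr p) / (2*pi)))"
      by (simp add: field_simps)
    also have "integral {0..2*pi} (\<lambda>x. G x powr p) / (2*pi) = integral_mean p v r"
      unfolding integral_mean_def G_def by simp
    also have "integral_mean p v r \<le> N powr p" using hardy_sup(1)[OF v _ r] p N_def by simp
    finally have "integral {0..2*pi} (\<lambda>x. F x powr p) / (2*pi) \<le> 2 powr p * (S powr p + k powr p * N powr p)"
      by (simp add: mult_left_mono)
    then show ?thesis unfolding integral_mean_def F_def Q_def using k N0 by (simp add: powr_mult)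
  qed
  have bdd: "bdd_above (integral_mean p u ` {0<..<1})"
    by (rule bdd_aboveI[of _ Q]) (use IM in auto)
  then show hu: "u \<in> hardy p" unfolding hardy_def using u by auto
  have "(SUP r\<in>{0<..<1}. integral_mean p u r) \<le> Q"
    by (rule cSUP_least) (use IM in auto)
  then have "hardy_norm p u \<le> Q powr (1/p)" unfolding hardy_norm_def
    using p by (intro powr_mono2) (auto intro!: cSUP_upper2[OF bdd, of "1/2"] imean_nonneg[OF u])
  also have "Q \<le> 2 powr p * (2 * (S + k * N) powr p)"
  proof -
    have "S powr p \<le> (S + k * N) powr p" using S k N0 p by (intro powr_mono2) auto
    moreover have "(k * N) powr p \<le> (S + k * N) powr p" using S k N0 p by (intro powr_mono2) auto
    ultimately show ?thesis unfolding Q_def by (intro mult_left_mono) auto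
  qed
  then have "Q powr (1/p) \<le> (2 powr p * (2 * (S + k * N) powr p)) powr (1/p)"
    using p by (intro powr_mono2) (auto simp: Q_def)
  also have "\<dots> = 2 * 2 powr (1/p) * (S + k * N)"
    using p S k N0 by (simp add: powr_mult powr_powr)
  also have "\<dots> \<le> 2 * 2 * (S + k * N)"
  proof -
    have "2 powr (1/p) \<le> 2 powr 1" using p by (intro powr_mono) auto
    then show ?thesis using S k N0 by (intro mult_right_mono mult_left_mono) auto
  qed
  finally show "hardy_norm p u \<le> 4 * (S + k * hardy_norm p v)" using N_def by simp
qed


lemma Sp_hol: "f \<in> Sp p \<Longrightarrow> f holomorphic_on ball 0 1"
  unfolding Sp_def disk_fun_def by auto

lemma Sp_norm_ge: assumes "g \<in> Sp p" "p > 1"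
  shows "cmod (g 0) \<le> Sp_norm p g" "hardy_norm p (deriv g) \<le> Sp_norm p g"
proof -
  have "hardy_norm p (deriv g) \<ge> 0" using hardy_sup(2)[of "deriv g" p "1/2"] assms unfolding Sp_def by auto
  then show "cmod (g 0) \<le> Sp_norm p g" "hardy_norm p (deriv g) \<le> Sp_norm p g"
    unfolding Sp_norm_def by auto
qed

lemma Sp_coeff:
  assumes g: "g \<in> Sp p" and p: "p > 1" and r: "0 < r" "r < 1"
  shows "cmod (cf g n) * r ^ n \<le> 2 * Sp_norm p g"
proof (cases n)
  case 0
  then show ?thesis using Sp_norm_ge(1)[OF g p] Sp_norm_ge(2)[OF g p]
    hardy_sup(2)[of "deriv g" p "1/2"] g p unfolding cf_def Sp_def by auto
next
  case (Suc m)
  have h: "deriv g \<in> hardy p" using g unfolding Sp_def by auto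
  have c: "cmod (cf (deriv g) m) * r ^ m \<le> 2 * hardy_norm p (deriv g)"
    by (rule coeff_hardy[OF h p r])
  have e: "cmod (cf (deriv g) m) = real (Suc m) * cmod (cf g (Suc m))"
    unfolding cf_deriv by (simp only: norm_mult norm_of_nat)
  have "cmod (cf g (Suc m)) * r ^ Suc m \<le> real (Suc m) * cmod (cf g (Suc m)) * r ^ m"
  proof -
    have "r ^ Suc m \<le> real (Suc m) * r ^ m" using r
      by (simp add: mult_right_mono[of r 1 "r^m"] less_imp_le order_trans[OF _ mult_right_mono[of 1 "real (Suc m)" "r^m"]])
    then have "cmod (cf g (Suc m)) * r ^ Suc m \<le> cmod (cf g (Suc m)) * (real (Suc m) * r ^ m)"
      by (rule mult_left_mono) simp
    then show ?thesis by (simp add: algebra_simps)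
  qed
  also have "\<dots> \<le> 2 * hardy_norm p (deriv g)" using c e by simp
  also have "\<dots> \<le> 2 * Sp_norm p g" using Sp_norm_ge(2)[OF g p] by simp
  finally show ?thesis using Suc by simp
qed

lemma deriv_comp_pow:
  assumes f: "f holomorphic_on ball 0 1" and a: "cmod a < 1" and M: "M \<ge> 1" and z: "z \<in> ball 0 1"
  shows "((\<lambda>z. deriv f (a * z ^ M)) has_field_derivative
           (of_nat M * a * z ^ (M - 1) * deriv (deriv f) (a * z ^ M))) (at z)"
proof -
  have w: "a * z ^ M \<in> ball 0 1"
  proof -
    have "cmod (a * z ^ M) = cmod a * cmod z ^ M" by (simp add: norm_mult norm_power)
    also have "\<dots> \<le> cmod a * 1" using z by (intro mult_left_mono power_le_one) auto
    finally show ?thesis using a by simp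
  qed
  have d1: "(deriv f has_field_derivative deriv (deriv f) (a * z ^ M)) (at (a * z ^ M))"
    by (rule holomorphic_derivI[OF holomorphic_deriv[OF f] _ w]) auto
  have d2: "((\<lambda>z. a * z ^ M) has_field_derivative (a * (of_nat M * z ^ (M - 1)))) (at z)"
  proof -
    have "((\<lambda>x. x ^ M) has_field_derivative of_nat M * z ^ (M - 1)) (at z)"
      using DERIV_power[OF DERIV_ident[of "at z"], of M] by simp
    then show ?thesis by (rule DERIV_cmult)
  qed
  from DERIV_chain2[OF d1 d2] show ?thesis by (simp add: algebra_simps)
qed

lemma ball_pow: "cmod a < 1 \<Longrightarrow> z \<in> ball 0 1 \<Longrightarrow> cmod (a * z ^ M) \<le> cmod a"
proof -
  assume "z \<in> ball 0 1"
  then have "cmod z ^ M \<le> 1" by (intro power_le_one) auto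
  then show "cmod (a * z ^ M) \<le> cmod a" by (simp add: norm_mult norm_power mult_left_le)
qed

lemma HB:
  assumes p: "p > 1" and f: "f holomorphic_on ball 0 1" and a: "cmod a < 1" and M: "M \<ge> 1"
    and K: "K holomorphic_on ball 0 1" "deriv K \<in> hardy p"
    and H: "\<And>z. z \<in> ball 0 1 \<Longrightarrow> H z = \<alpha> * deriv f (a * z ^ M) + \<beta> * K z"
    and S: "S \<ge> 0" "\<And>w. cmod w \<le> cmod a \<Longrightarrow> cmod (deriv (deriv f) w) \<le> S"
  shows "H holomorphic_on ball 0 1" "deriv H \<in> hardy p"
    "hardy_norm p (deriv H) \<le> 4 * (cmod \<alpha> * M * cmod a * S + cmod \<beta> * hardy_norm p (deriv K))"
proof -
  define H' where "H' = (\<lambda>z. \<alpha> * deriv f (a * z ^ M) + \<beta> * K z)"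
  have dH': "(H' has_field_derivative (\<alpha> * (of_nat M * a * z ^ (M - 1) * deriv (deriv f) (a * z ^ M)) + \<beta> * deriv K z)) (at z)"
    if z: "z \<in> ball 0 1" for z
    unfolding H'_def
    by (intro DERIV_add DERIV_cmult deriv_comp_pow[OF f a M z] holomorphic_derivI[OF K(1) _ z]) auto
  have dH: "(H has_field_derivative (\<alpha> * (of_nat M * a * z ^ (M - 1) * deriv (deriv f) (a * z ^ M)) + \<beta> * deriv K z)) (at z)"
    if z: "z \<in> ball 0 1" for z
    by (rule has_field_derivative_transform_within_open[OF dH'[OF z] _ z]) (auto simp: H'_def H)
  show hH: "H holomorphic_on ball 0 1"
    unfolding holomorphic_on_def using dH field_differentiable_def field_differentiable_at_within by blast
  have hdH: "deriv H holomorphic_on ball 0 1" by (rule holomorphic_deriv[OF hH]) auto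
  have eq: "deriv H z = \<alpha> * (of_nat M * a * z ^ (M - 1) * deriv (deriv f) (a * z ^ M)) + \<beta> * deriv K z"
    if "z \<in> ball 0 1" for z using DERIV_imp_deriv[OF dH[OF that]] .
  have le: "cmod (deriv H z) \<le> cmod \<alpha> * M * cmod a * S + cmod \<beta> * cmod (deriv K z)"
    if z: "z \<in> ball 0 1" for z
  proof -
    have z1: "cmod z ^ (M - 1) \<le> 1" using z by (intro power_le_one) auto
    have s: "cmod (deriv (deriv f) (a * z ^ M)) \<le> S" by (rule S(2)[OF ball_pow[OF a z]])
    have "cmod (\<alpha> * (of_nat M * a * z ^ (M - 1) * deriv (deriv f) (a * z ^ M)))
        = cmod \<alpha> * M * cmod a * cmod z ^ (M - 1) * cmod (deriv (deriv f) (a * z ^ M))"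
      by (simp add: norm_mult norm_power)
    also have "\<dots> \<le> cmod \<alpha> * M * cmod a * 1 * S"
      by (intro mult_mono z1 s mult_nonneg_nonneg) auto
    finally show ?thesis unfolding eq[OF z]
      by (intro order_trans[OF norm_triangle_ineq]) (simp add: norm_mult)
  qed
  show "deriv H \<in> hardy p"
    by (rule hardy_dom(1)[OF p hdH K(2) _ _ le]) (use S in auto)
  show "hardy_norm p (deriv H) \<le> 4 * (cmod \<alpha> * M * cmod a * S + cmod \<beta> * hardy_norm p (deriv K))"
    by (rule hardy_dom(2)[OF p hdH K(2) _ _ le]) (use S in auto)
qed


definition dc :: "nat \<Rightarrow> complex \<Rightarrow> (nat \<Rightarrow> complex) \<Rightarrow> nat \<Rightarrow> complex" where
  "dc M a e k = (if M dvd k then of_nat (k div M + 1) * a ^ (k div M) * e (k div M + 1) else 0)"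

lemma dc_sums:
  assumes f: "f holomorphic_on ball 0 1" and a: "cmod a < 1" and M: "M \<ge> 1" and z: "z \<in> ball 0 1"
  shows "(\<lambda>k. dc M a (cf f) k * z ^ k) sums deriv f (a * z ^ M)"
proof -
  have w: "a * z ^ M \<in> ball 0 1" using ball_pow[OF a z, of M] a by simp
  have "(\<lambda>n. cf (deriv f) n * (a * z ^ M) ^ n) sums deriv f (a * z ^ M)"
    by (rule cf_ps[OF holomorphic_deriv[OF f] w]) auto
  moreover have "cf (deriv f) n * (a * z ^ M) ^ n = dc M a (cf f) (M * n) * z ^ (M * n)" for n
    using M unfolding cf_deriv dc_def by (simp add: power_mult_distrib power_mult algebra_simps)
  ultimately have "(\<lambda>n. dc M a (cf f) (M * n) * z ^ (M * n)) sums deriv f (a * z ^ M)" by simp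
  moreover have "strict_mono (\<lambda>n::nat. M * n)" using M by (intro strict_monoI) auto
  ultimately show ?thesis
    by (subst (asm) sums_mono_reindex[where f = "\<lambda>k. dc M a (cf f) k * z ^ k"]) (auto simp: dc_def)
qed

lemma coeff_D:
  assumes f: "f holomorphic_on ball 0 1" and a: "cmod a < 1" and M: "M \<ge> 1"
    and g: "\<And>z. z \<in> ball 0 1 \<Longrightarrow> g z = deriv f (a * z ^ M) - c * f z"
  shows "cf g k = dc M a (cf f) k - c * cf f k"
proof -
  have "(\<lambda>k. (dc M a (cf f) k - c * cf f k) * z ^ k) sums g z" if z: "z \<in> ball 0 1" for z
  proof -
    have "(\<lambda>k. dc M a (cf f) k * z ^ k - c * (cf f k * z ^ k)) sums (deriv f (a * z ^ M) - c * f z)"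
      by (intro sums_diff sums_mult dc_sums[OF f a M z] cf_ps[OF f z])
    moreover have "deriv f (a * z ^ M) - c * f z = g z" using g[OF z] by simp
    ultimately show ?thesis by (simp add: algebra_simps)
  qed
  then show ?thesis by (intro cf_uniq[of 1]) auto
qed


lemma prod_max_ge1: "1 \<le> (\<Prod>i<n. max 1 ((t :: nat \<Rightarrow> real) i))"
  by (rule prod_ge_1) auto

lemma prod_max_mono: "m \<le> n \<Longrightarrow> (\<Prod>i<m. max 1 ((t :: nat \<Rightarrow> real) i)) \<le> (\<Prod>i<n. max 1 (t i))"
proof (induction n)
  case 0 then show ?case by simp
next
  case (Suc n)
  show ?case
  proof (cases "m = Suc n")
    case False
    then have "(\<Prod>i<m. max 1 (t i)) \<le> (\<Prod>i<n. max 1 (t i))" using Suc by simp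
    also have "\<dots> \<le> (\<Prod>i<n. max 1 (t i)) * max 1 (t n)"
      using prod_max_ge1[where t=t and n=n] by (intro mult_le_cancel_left1[THEN iffD2]) auto
    finally show ?thesis by simp
  qed simp
qed

lemma prod_max_bdd:
  fixes t :: "nat \<Rightarrow> real"
  assumes "eventually (\<lambda>i. t i \<le> 1) sequentially"
  shows "\<exists>U. \<forall>n. (\<Prod>i<n. max 1 (t i)) \<le> U"
proof -
  obtain N where N: "\<And>i. i \<ge> N \<Longrightarrow> t i \<le> 1" using assms unfolding eventually_sequentially by blast
  have eq: "(\<Prod>i<n. max 1 (t i)) = (\<Prod>i<N. max 1 (t i))" if "n \<ge> N" for n
    using that
  proof (induction n)
    case 0 then show ?case by simp
  next
    case (Suc n)
    show ?case
    proof (cases "Suc n = N")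
      case False
      then have "n \<ge> N" using Suc by simp
      then show ?thesis using Suc N[of n] by (simp add: max_def)
    qed simp
  qed
  have "(\<Prod>i<n. max 1 (t i)) \<le> (\<Prod>i<N. max 1 (t i))" for n
    using prod_max_mono[where t=t and m=n and n="max n N"] eq[of "max n N"] by simp
  then show ?thesis by blast
qed

section \<open>Case M = 1\<close>

definition Xs :: "complex \<Rightarrow> complex \<Rightarrow> (nat \<Rightarrow> complex) \<Rightarrow> nat \<Rightarrow> nat \<Rightarrow> complex" where
  "Xs a c G k j = G (k + j) * (\<Prod>i<j. of_nat (k + i + 1) * a ^ (k + i) / c)"

lemma Xs_Suc: "Xs a c G k (Suc j) = (of_nat (Suc k) * a ^ k / c) * Xs a c G (Suc k) j"
  unfolding Xs_def prod.lessThan_Suc_shift by (simp add: algebra_simps)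

lemma Xs_bound:
  assumes w: "\<And>k. w k > 0" and ratio: "\<And>k. of_nat (Suc k) * cmod a ^ k * w k \<le> q * cmod c * w (Suc k)"
    and c: "c \<noteq> 0" and q: "q \<ge> 0"
  shows "cmod (\<Prod>i<j. of_nat (k + i + 1) * a ^ (k + i) / c) * w k \<le> q ^ j * w (k + j)"
proof (induction j)
  case 0 then show ?case by simp
next
  case (Suc j)
  have "cmod (\<Prod>i<Suc j. of_nat (k + i + 1) * a ^ (k + i) / c) * w k
     = (cmod (\<Prod>i<j. of_nat (k + i + 1) * a ^ (k + i) / c) * w k) * (of_nat (Suc (k + j)) * cmod a ^ (k + j) / cmod c)"
  proof -
    have n: "cmod (of_nat (k + j + 1) * a ^ (k + j) / c) = of_nat (Suc (k + j)) * cmod a ^ (k + j) / cmod c"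
      by (simp only: norm_mult norm_divide norm_power norm_of_nat) simp
    show ?thesis unfolding prod.lessThan_Suc norm_mult n by (simp only: mult_ac)
  qed
  also have "\<dots> \<le> (q ^ j * w (k + j)) * (of_nat (Suc (k + j)) * cmod a ^ (k + j) / cmod c)"
    by (intro mult_right_mono Suc) auto
  also have "\<dots> = q ^ j * (of_nat (Suc (k + j)) * cmod a ^ (k + j) * w (k + j)) / cmod c"
    by (simp add: algebra_simps)
  also have "\<dots> \<le> q ^ j * (q * cmod c * w (Suc (k + j))) / cmod c"
    using q c by (intro divide_right_mono mult_left_mono ratio) auto
  also have "\<dots> = q ^ Suc j * w (k + Suc j)" using c by (simp add: field_simps)
  finally show ?case .
qed

lemma seq1_exist:
  assumes c: "c \<noteq> 0" and q: "0 \<le> q" "q < 1" and w: "\<And>k. w k > 0"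
    and ratio: "\<And>k. of_nat (Suc k) * cmod a ^ k * w k \<le> q * cmod c * w (Suc k)"
    and G: "\<And>n. cmod (G n) * w n \<le> B"
  shows "\<exists>e. (\<forall>k. c * e k = of_nat (Suc k) * a ^ k * e (Suc k) - G k) \<and>
             (\<forall>k. cmod (e k) * w k \<le> B / (cmod c * (1 - q)))"
proof -
  have Xb: "cmod (Xs a c G k j) \<le> B / w k * q ^ j" for k j
  proof -
    have "cmod (Xs a c G k j) * w k = cmod (G (k + j)) * (cmod (\<Prod>i<j. of_nat (k + i + 1) * a ^ (k + i) / c) * w k)"
      unfolding Xs_def by (simp add: norm_mult)
    also have "\<dots> \<le> cmod (G (k + j)) * (q ^ j * w (k + j))"
      by (intro mult_left_mono Xs_bound[OF w ratio c q(1)]) auto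
    also have "\<dots> = (cmod (G (k + j)) * w (k + j)) * q ^ j" by simp
    also have "\<dots> \<le> B * q ^ j" using G q by (intro mult_right_mono) auto
    finally show ?thesis using w[of k] by (simp add: field_simps)
  qed
  have gs: "summable (\<lambda>j. B / w k * q ^ j)" for k
    using q by (intro summable_mult summable_geometric) auto
  have sX: "summable (Xs a c G k)" for k
    by (rule summable_comparison_test'[OF gs, of 0]) (use Xb in auto)
  define e where "e k = - (suminf (Xs a c G k)) / c" for k
  have "c * e k = of_nat (Suc k) * a ^ k * e (Suc k) - G k" for k
  proof -
    have "suminf (Xs a c G k) = Xs a c G k 0 + suminf (\<lambda>j. Xs a c G k (Suc j))"
      using suminf_split_head[OF sX[of k]] by simp
    also have "suminf (\<lambda>j. Xs a c G k (Suc j)) = (of_nat (Suc k) * a ^ k / c) * suminf (Xs a c G (Suc k))"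
      unfolding Xs_Suc by (rule suminf_mult[OF sX])
    also have "Xs a c G k 0 = G k" by (simp add: Xs_def)
    finally have S: "suminf (Xs a c G k) = G k + of_nat (Suc k) * a ^ k / c * suminf (Xs a c G (Suc k))" .
    show ?thesis using c unfolding e_def S by (simp add: field_simps del: of_nat_Suc)
  qed
  moreover have "cmod (e k) * w k \<le> B / (cmod c * (1 - q))" for k
  proof -
    have "cmod (suminf (Xs a c G k)) \<le> (\<Sum>j. B / w k * q ^ j)"
      by (rule norm_suminf_le[OF Xb gs])
    also have "\<dots> = B / w k / (1 - q)"
    proof -
      have "(\<Sum>j. B / w k * q ^ j) = B / w k * (\<Sum>j. q ^ j)"
        using q by (intro suminf_mult summable_geometric) auto
      also have "(\<Sum>j. q ^ j) = 1 / (1 - q)" using q by (intro suminf_geometric) auto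
      finally show ?thesis by simp
    qed
    finally have X: "cmod (suminf (Xs a c G k)) \<le> B / w k / (1 - q)" .
    have "cmod (e k) * w k = cmod (suminf (Xs a c G k)) * w k / cmod c"
      unfolding e_def by (simp add: norm_divide)
    also have "\<dots> \<le> (B / w k / (1 - q)) * w k / cmod c"
      using w[of k] by (intro divide_right_mono mult_right_mono X) auto
    also have "\<dots> = B / (cmod c * (1 - q))" using w[of k] q c by (simp add: field_simps)
    finally show ?thesis .
  qed
  ultimately show ?thesis by blast
qed

lemma seq1_uniq:
  assumes c: "c \<noteq> 0" and q: "0 \<le> q" "q < 1" and w: "\<And>k. w k > 0"
    and ratio: "\<And>k. of_nat (Suc k) * cmod a ^ k * w k \<le> q * cmod c * w (Suc k)"
    and d: "\<And>k. c * d k = of_nat (Suc k) * a ^ k * d (Suc k)"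
    and C: "\<And>k. cmod (d k) * w k \<le> C"
  shows "d k = 0"
proof -
  have "\<forall>k. cmod (d k) * w k \<le> C * q ^ j" for j
  proof (induction j)
    case 0 then show ?case using C by simp
  next
    case (Suc j)
    show ?case
    proof
      fix k
      have dk: "d k = of_nat (Suc k) * a ^ k * d (Suc k) / c"
        using d[of k] c by (simp add: eq_divide_eq mult.commute)
      have "cmod (d k) = real (Suc k) * cmod a ^ k * cmod (d (Suc k)) / cmod c"
        by (subst dk) (simp only: norm_mult norm_divide norm_power norm_of_nat)
      then have "cmod (d k) * w k = (of_nat (Suc k) * cmod a ^ k * w k) * cmod (d (Suc k)) / cmod c"
        by (simp add: field_simps del: of_nat_Suc)
      also have "\<dots> \<le> (q * cmod c * w (Suc k)) * cmod (d (Suc k)) / cmod c"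
        by (intro divide_right_mono mult_right_mono ratio) auto
      also have "\<dots> = q * (cmod (d (Suc k)) * w (Suc k))" using c by simp
      also have "\<dots> \<le> q * (C * q ^ j)" using Suc q by (intro mult_left_mono) auto
      finally show "cmod (d k) * w k \<le> C * q ^ Suc j" by (simp add: algebra_simps)
    qed
  qed
  then have all: "cmod (d k) * w k \<le> C * q ^ j" for j by blast
  show "d k = 0"
  proof (rule ccontr)
    assume "d k \<noteq> 0"
    then have pos: "cmod (d k) * w k > 0" using w[of k] by simp
    have C0: "C \<ge> 0" using C[of k] pos by linarith
    show False
    proof (cases "C = 0")
      case True then show False using all[of 0] pos by simp
    next
      case False
      then have "C > 0" using C0 by simp
      obtain j where "q ^ j < cmod (d k) * w k / C"
        using real_arch_pow_inv[of "cmod (d k) * w k / C" q] pos \<open>C > 0\<close> q by auto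
      then have "C * q ^ j < cmod (d k) * w k" using \<open>C > 0\<close> by (simp add: field_simps)
      then show False using all[of j] by simp
    qed
  qed
qed


lemma div_lt_M:
  assumes M: "M \<ge> 2" and k: "k \<ge> 1" "M dvd k" and nk: "\<not> (M = 2 \<and> k = 2)"
  shows "k div M + 1 < (k::nat)"
proof -
  obtain m where km: "k = M * m" using k by blast
  have m: "m \<ge> 1" using k km by (cases m) auto
  have kd: "k div M = m" using km M by simp
  show ?thesis
  proof (cases "M = 2")
    case True
    then have "m \<noteq> 1" using nk km by auto
    then show ?thesis using kd km True m by simp
  next
    case False
    then have "M \<ge> 3" using M by simp
    then have "M * m \<ge> 3 * m" by simp
    then show ?thesis using kd km m by linarith
  qed
qed

lemma div_lt_M': "0 < k \<Longrightarrow> M dvd k \<Longrightarrow> 2 \<le> M \<Longrightarrow> \<not> (M = 2 \<and> k = 2) \<Longrightarrow> Suc (k div M) < k"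
  using div_lt_M[of M k] by simp

function solc :: "nat \<Rightarrow> complex \<Rightarrow> complex \<Rightarrow> (nat \<Rightarrow> complex) \<Rightarrow> nat \<Rightarrow> complex" where
  "solc M a c G k = (if k = 0 then (solc M a c G 1 - G 0) / c
     else if M dvd k \<and> 2 \<le> M \<and> \<not> (M = 2 \<and> k = 2)
       then (of_nat (k div M + 1) * a ^ (k div M) * solc M a c G (k div M + 1) - G k) / c
     else if M = 2 \<and> k = 2 then - G 2 / (c - 2 * a)
     else - G k / c)"
  by pat_completeness auto
termination
  apply (relation "Wellfounded.measure (\<lambda>(M::nat, a::complex, c::complex, G::nat\<Rightarrow>complex, k::nat). if k = 0 then 2 else k)")
  apply (auto intro!: div_lt_M')
  done

declare solc.simps[simp del]

lemma solc_eq: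
  assumes c: "c \<noteq> 0" and M: "M \<ge> 2" and c2: "M = 2 \<longrightarrow> c \<noteq> 2 * a"
  shows "c * solc M a c G k = dc M a (solc M a c G) k - G k"
proof -
  consider "k = 0" | "k \<noteq> 0" "M dvd k" "\<not> (M = 2 \<and> k = 2)" | "M = 2" "k = 2" | "k \<noteq> 0" "\<not> M dvd k"
    by blast
  then show ?thesis
  proof cases
    case 1
    then show ?thesis using c by (subst solc.simps) (simp add: dc_def)
  next
    case 2
    then show ?thesis using c M by (subst solc.simps) (simp add: dc_def)
  next
    case 3
    then have ne: "c - 2 * a \<noteq> 0" using c2 by simp
    have s: "solc M a c G k = - G 2 / (c - 2 * a)" using 3 by (subst solc.simps) simp
    have dd: "dc M a (solc M a c G) k = 2 * a * solc M a c G k" using 3 by (simp add: dc_def eval_nat_numeral)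
    have "(c - 2 * a) * solc M a c G k = - G 2" using ne s by simp
    then show ?thesis unfolding dd using 3 by (simp add: algebra_simps)
  next
    case 4
    then have "\<not> (M = 2 \<and> k = 2)" by auto
    then show ?thesis using c 4 by (subst solc.simps) (auto simp: dc_def)
  qed
qed

lemma solc_bound:
  assumes c: "c \<noteq> 0" and M: "M \<ge> 2" and q: "0 \<le> q" "q < 1" and w: "\<And>k. w k > 0"
    and ratio: "\<And>k. 1 \<le> k \<Longrightarrow> M dvd k \<Longrightarrow> \<not> (M = 2 \<and> k = 2) \<Longrightarrow>
        of_nat (k div M + 1) * cmod a ^ (k div M) * w k \<le> q * cmod c * w (k div M + 1)"
    and G: "\<And>n. cmod (G n) * w n \<le> B"
    and K: "K = 1 / (cmod c * (1 - q)) + 1 / cmod (c - 2 * a)"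
  shows "k \<ge> 1 \<Longrightarrow> cmod (solc M a c G k) * w k \<le> B * K"
proof (induction k rule: less_induct)
  case (less k)
  have B0: "B \<ge> 0" using G[of 0] w[of 0] by (meson mult_nonneg_nonneg norm_ge_zero less_imp_le order_trans)
  have K1: "1 / cmod c \<le> K - q * K"
  proof -
    have "1 / cmod c = (1 / (cmod c * (1 - q))) * (1 - q)" using q c by (simp add: field_simps)
    also have "\<dots> \<le> K * (1 - q)" using q K by (intro mult_right_mono) auto
    finally show ?thesis by (simp add: algebra_simps)
  qed
  have K0: "K \<ge> 0" using K q by auto
  consider "M dvd k" "\<not> (M = 2 \<and> k = 2)" | "M = 2" "k = 2" | "\<not> M dvd k" by blast
  then show ?case
  proof cases
    case 1
    define n where "n = k div M + 1"
    have nk: "n < k" unfolding n_def using div_lt_M[OF M less.prems 1(1) 1(2)] .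
    have n1: "n \<ge> 1" unfolding n_def by simp
    have IH: "cmod (solc M a c G n) * w n \<le> B * K" using less.IH[OF nk n1] .
    have e: "solc M a c G k = (of_nat n * a ^ (k div M) * solc M a c G n - G k) / c"
      using 1 less.prems M by (subst solc.simps) (simp add: n_def)
    have "cmod (solc M a c G k) * w k \<le> (of_nat n * cmod a ^ (k div M) * cmod (solc M a c G n) + cmod (G k)) * w k / cmod c"
    proof -
      have "cmod (of_nat n * a ^ (k div M) * solc M a c G n - G k) \<le> of_nat n * cmod a ^ (k div M) * cmod (solc M a c G n) + cmod (G k)"
        by (rule order_trans[OF norm_triangle_ineq4]) (simp add: norm_mult norm_power)
      then show ?thesis unfolding e using w[of k] by (simp add: norm_divide divide_right_mono mult_right_mono)
    qed
    also have "\<dots> = (of_nat n * cmod a ^ (k div M) * w k) * cmod (solc M a c G n) / cmod c + cmod (G k) * w k / cmod c"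
      by (simp add: algebra_simps add_divide_distrib)
    also have "\<dots> \<le> (q * cmod c * w n) * cmod (solc M a c G n) / cmod c + B / cmod c"
      using ratio[OF less.prems 1(1) 1(2)] G[of k]
      by (intro add_mono divide_right_mono mult_right_mono) (auto simp: n_def)
    also have "\<dots> = q * (cmod (solc M a c G n) * w n) + B * (1 / cmod c)" using c by simp
    also have "\<dots> \<le> q * (B * K) + B * (K - q * K)"
      using IH q B0 K1 by (intro add_mono mult_left_mono) auto
    also have "\<dots> = B * K" by (simp add: algebra_simps)
    finally show ?thesis .
  next
    case 2
    have e: "solc M a c G k = - G 2 / (c - 2 * a)" using 2 by (subst solc.simps) simp
    have "cmod (solc M a c G k) * w k = cmod (G k) * w k / cmod (c - 2 * a)"
      unfolding e using 2 by (simp add: norm_divide)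
    also have "\<dots> \<le> B / cmod (c - 2 * a)" using G[of k] by (intro divide_right_mono) auto
    also have "\<dots> \<le> B * K" using K q c B0
      by (simp add: divide_inverse mult_left_mono)
    finally show ?thesis .
  next
    case 3
    have e: "solc M a c G k = - G k / c" using 3 less.prems by (subst solc.simps) auto
    have "cmod (solc M a c G k) * w k = cmod (G k) * w k / cmod c"
      unfolding e by (simp add: norm_divide)
    also have "\<dots> \<le> B / cmod c" using G[of k] by (intro divide_right_mono) auto
    also have "\<dots> = B * (1 / cmod c)" by simp
    also have "\<dots> \<le> B * K"
    proof -
      have "q * K \<ge> 0" using q K0 by simp
      then have "1 / cmod c \<le> K" using K1 by linarith
      then show ?thesis using B0 by (intro mult_left_mono) auto
    qed
    finally show ?thesis .
  qed
qed

lemma seq2_uniq: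
  assumes c: "c \<noteq> 0" and M: "M \<ge> 2" and c2: "M = 2 \<longrightarrow> c \<noteq> 2 * a"
    and d: "\<And>k. c * d k = dc M a d k"
  shows "d k = 0"
proof -
  have pos: "k \<ge> 1 \<Longrightarrow> d k = 0" for k
  proof (induction k rule: less_induct)
    case (less k)
    consider "M dvd k" "\<not> (M = 2 \<and> k = 2)" | "M = 2" "k = 2" | "\<not> M dvd k" by blast
    then show ?case
    proof cases
      case 1
      have nk: "k div M + 1 < k" using div_lt_M[OF M less.prems 1(1) 1(2)] .
      have "d (k div M + 1) = 0" using less.IH[OF nk] by simp
      then show ?thesis using d[of k] c 1 by (simp add: dc_def)
    next
      case 2
      have "c * d 2 = 2 * a * d 2" using d[of 2] 2 by (simp add: dc_def eval_nat_numeral)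
      then have "(c - 2 * a) * d 2 = 0" by (simp add: algebra_simps)
      then show ?thesis using 2 c2 by simp
    next
      case 3
      then show ?thesis using d[of k] c by (simp add: dc_def)
    qed
  qed
  show ?thesis
  proof (cases "k = 0")
    case True
    have "c * d 0 = d 1" using d[of 0] by (simp add: dc_def)
    then show ?thesis using pos[of 1] c True by simp
  qed (use pos in auto)
qed


lemma Suc_pow_lim:
  fixes r :: real assumes "0 \<le> r" "r < 1"
  shows "(\<lambda>n. real (Suc n) * r ^ n) \<longlonglongrightarrow> 0"
proof -
  have "(\<lambda>n. of_nat n * r ^ n) \<longlonglongrightarrow> 0" using powser_times_n_limit_0[of r] assms by simp
  moreover have "(\<lambda>n. r ^ n) \<longlonglongrightarrow> 0" using assms by (intro LIMSEQ_power_zero) auto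
  ultimately have "(\<lambda>n. of_nat n * r ^ n + r ^ n) \<longlonglongrightarrow> 0 + 0" by (rule tendsto_add)
  then show ?thesis by (simp add: algebra_simps)
qed

lemma ev_le1:
  fixes t :: "nat \<Rightarrow> real" assumes "t \<longlonglongrightarrow> 0"
  shows "eventually (\<lambda>i. t i \<le> 1) sequentially"
  using order_tendstoD(2)[OF assms, of 1] by (auto elim: eventually_mono)

lemma dc1: "dc 1 a e k = of_nat (Suc k) * a ^ k * e (Suc k)"
  unfolding dc_def by simp

lemma dc_diff: "dc M a (\<lambda>k. e k - e' k) k = dc M a e k - dc M a e' k"
  unfolding dc_def by (simp add: algebra_simps)

locale setting =
  fixes a c :: complex and M :: nat and R :: real
  assumes a0: "0 < cmod a" and aR: "cmod a < R" and R1: "R < 1" and M1: "M \<ge> 1"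
    and c0: "c \<noteq> 0" and c2: "M = 2 \<longrightarrow> c \<noteq> 2 * a"
begin

lemma R0: "R > 0" by (rule less_trans[OF _ aR]) (use a0 in simp)

definition "t1 i = real (Suc i) * cmod a ^ i / (1/2 * cmod c * R)"
definition "u1 n = (\<Prod>i<n. max 1 (t1 i))"
definition "w1 n = R ^ n * u1 n"

lemma u1_ge: "u1 n \<ge> 1" unfolding u1_def by (rule prod_max_ge1)

lemma u1_bdd: "\<exists>U. \<forall>n. u1 n \<le> U"
proof -
  have "(\<lambda>i. real (Suc i) * cmod a ^ i / (1/2 * cmod c * R)) \<longlonglongrightarrow> 0 / (1/2 * cmod c * R)"
    using a0 aR R1 c0 R0 by (intro tendsto_divide Suc_pow_lim) auto
  then have "eventually (\<lambda>i. t1 i \<le> 1) sequentially" unfolding t1_def by (intro ev_le1) simp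
  from prod_max_bdd[OF this] show ?thesis unfolding u1_def by blast
qed

lemma w1_pos: "w1 n > 0" unfolding w1_def using R0 u1_ge[of n] by simp

lemma w1_ratio: "of_nat (Suc k) * cmod a ^ k * w1 k \<le> 1/2 * cmod c * w1 (Suc k)"
proof -
  have e: "1/2 * cmod c * R * t1 k = real (Suc k) * cmod a ^ k" unfolding t1_def using c0 R0 by simp
  have "of_nat (Suc k) * cmod a ^ k * w1 k = (1/2 * cmod c * R * t1 k) * (R ^ k * u1 k)"
    unfolding w1_def e by simp
  also have "\<dots> \<le> (1/2 * cmod c * R * max 1 (t1 k)) * (R ^ k * u1 k)"
    using R0 u1_ge[of k] by (intro mult_right_mono mult_left_mono) auto
  also have "\<dots> = 1/2 * cmod c * w1 (Suc k)" unfolding w1_def u1_def by (simp add: algebra_simps)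
  finally show ?thesis .
qed

definition "T2 j = real j * cmod a ^ j / (cmod a * (1/2) * cmod c)"
definition "v2 n = (\<Prod>i<n. max 1 (T2 i))"
definition "w2 n = R ^ n / v2 n"

lemma v2_ge: "v2 n \<ge> 1" unfolding v2_def by (rule prod_max_ge1)

lemma v2_mono: "m \<le> n \<Longrightarrow> v2 m \<le> v2 n" unfolding v2_def by (rule prod_max_mono)

lemma v2_bdd: "\<exists>V. \<forall>n. v2 n \<le> V"
proof -
  have "(\<lambda>j. real j * cmod a ^ j / (cmod a * (1/2) * cmod c)) \<longlonglongrightarrow> 0 / (cmod a * (1/2) * cmod c)"
    using a0 aR R1 c0 powser_times_n_limit_0[of "cmod a"] by (intro tendsto_divide) auto
  then have "eventually (\<lambda>i. T2 i \<le> 1) sequentially" unfolding T2_def by (intro ev_le1) simp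
  from prod_max_bdd[OF this] show ?thesis unfolding v2_def by blast
qed

lemma w2_pos: "w2 n > 0" unfolding w2_def using R0 v2_ge[of n] by simp

lemma w2_ratio:
  assumes M2: "M \<ge> 2" and k: "1 \<le> k" "M dvd k" "\<not> (M = 2 \<and> k = 2)"
  shows "of_nat (k div M + 1) * cmod a ^ (k div M) * w2 k \<le> 1/2 * cmod c * w2 (k div M + 1)"
proof -
  define i where "i = k div M"
  have ki: "i + 2 \<le> k" using div_lt_M[OF M2 k] unfolding i_def by simp
  have e: "of_nat (i + 1) * cmod a ^ i = 1/2 * cmod c * T2 (Suc i)"
    unfolding T2_def using a0 c0 by (simp add: field_simps)
  have "w2 k \<le> R ^ (i + 1) / v2 (i + 2)"
  proof -
    have "R ^ k \<le> R ^ (i + 1)" using ki R0 R1 by (intro power_decreasing) auto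
    moreover have "v2 (i + 2) \<le> v2 k" using ki by (rule v2_mono)
    ultimately show ?thesis unfolding w2_def using R0 v2_ge[of "i+2"]
      by (intro frac_le) auto
  qed
  also have "v2 (i + 2) = v2 (i + 1) * max 1 (T2 (Suc i))" unfolding v2_def by simp
  finally have wk: "w2 k \<le> R ^ (i + 1) / (v2 (i + 1) * max 1 (T2 (Suc i)))" .
  have "of_nat (i + 1) * cmod a ^ i * w2 k \<le> (1/2 * cmod c * T2 (Suc i)) * (R ^ (i + 1) / (v2 (i + 1) * max 1 (T2 (Suc i))))"
    unfolding e by (intro mult_left_mono wk) (auto simp: T2_def)
  also have "\<dots> \<le> (1/2 * cmod c * max 1 (T2 (Suc i))) * (R ^ (i + 1) / (v2 (i + 1) * max 1 (T2 (Suc i))))"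
    using R0 v2_ge[of "i+1"] by (intro mult_right_mono mult_left_mono) auto
  also have "\<dots> = 1/2 * cmod c * w2 (i + 1)" unfolding w2_def by (simp add: field_simps)
  finally show ?thesis unfolding i_def by simp
qed

definition "eqn G e \<longleftrightarrow> (\<forall>k. c * e k = dc M a e k - G k)"

lemma SEQ: "\<exists>K0\<ge>0. \<forall>G B. (\<forall>n. cmod (G n) * R ^ n \<le> B) \<longrightarrow>
    (\<exists>e. eqn G e \<and> (\<forall>k. cmod (e k) * R ^ k \<le> K0 * B))"
proof (cases "M = 1")
  case True
  obtain U where U: "\<And>n. u1 n \<le> U" using u1_bdd by blast
  have U1: "U \<ge> 1" using U[of 0] u1_ge[of 0] by simp
  define K0 where "K0 = U / (cmod c * (1 - 1/2))"
  have "K0 \<ge> 0" unfolding K0_def using U1 by simp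
  moreover have "\<exists>e. eqn G e \<and> (\<forall>k. cmod (e k) * R ^ k \<le> K0 * B)" if G: "\<forall>n. cmod (G n) * R ^ n \<le> B" for G B
  proof -
    have "cmod (G 0) \<le> B" using G[rule_format, of 0] by simp
    then have B0: "B \<ge> 0" using norm_ge_zero[of "G 0"] by linarith
    have Gw: "cmod (G n) * w1 n \<le> B * U" for n
    proof -
      have "cmod (G n) * w1 n = (cmod (G n) * R ^ n) * u1 n" unfolding w1_def by simp
      also have "\<dots> \<le> B * U" using G[rule_format, of n] U[of n] u1_ge[of n] B0
        by (intro mult_mono) auto
      finally show ?thesis .
    qed
    obtain e where e1: "\<forall>k. c * e k = of_nat (Suc k) * a ^ k * e (Suc k) - G k"
      and e2: "\<forall>k. cmod (e k) * w1 k \<le> B * U / (cmod c * (1 - 1/2))"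
      using seq1_exist[OF c0 _ _ w1_pos w1_ratio Gw] by auto
    have "eqn G e" unfolding eqn_def
    proof
      fix k
      have "dc M a e k = of_nat (Suc k) * a ^ k * e (Suc k)" using dc1[of a e k] True by simp
      then show "c * e k = dc M a e k - G k" using e1 by simp
    qed
    moreover have "cmod (e k) * R ^ k \<le> K0 * B" for k
    proof -
      have "cmod (e k) * R ^ k \<le> cmod (e k) * w1 k"
        unfolding w1_def using u1_ge[of k] R0 by (intro mult_left_mono) (auto simp: mult_le_cancel_left1)
      also have "\<dots> \<le> K0 * B" using e2 unfolding K0_def by (simp add: field_simps)
      finally show ?thesis .
    qed
    ultimately show ?thesis by blast
  qed
  ultimately show ?thesis by blast
next
  case False
  then have M2: "M \<ge> 2" using M1 by simp
  obtain V where V: "\<And>n. v2 n \<le> V" using v2_bdd by blast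
  have V1: "V \<ge> 1" using V[of 0] v2_ge[of 0] by simp
  define K where "K = 1 / (cmod c * (1 - 1/2)) + 1 / cmod (c - 2 * a)"
  have K0: "K \<ge> 0" unfolding K_def by simp
  define K0 where "K0 = K * V + (K * V / R + 1) / cmod c"
  have "K0 \<ge> 0" unfolding K0_def using K0 V1 R0 by simp
  moreover have "\<exists>e. eqn G e \<and> (\<forall>k. cmod (e k) * R ^ k \<le> K0 * B)" if G: "\<forall>n. cmod (G n) * R ^ n \<le> B" for G B
  proof -
    have "cmod (G 0) \<le> B" using G[rule_format, of 0] by simp
    then have B0: "B \<ge> 0" using norm_ge_zero[of "G 0"] by linarith
    have Gw: "cmod (G n) * w2 n \<le> B" for n
    proof -
      have "cmod (G n) * w2 n = (cmod (G n) * R ^ n) / v2 n" unfolding w2_def by simp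
      also have "\<dots> \<le> cmod (G n) * R ^ n / 1" using v2_ge[of n] R0
        by (intro divide_left_mono) auto
      also have "\<dots> \<le> B" using G by auto
      finally show ?thesis .
    qed
    define e where "e = solc M a c G"
    have "eqn G e" unfolding eqn_def e_def using solc_eq[OF c0 M2 c2] by blast
    moreover have pos: "cmod (e k) * R ^ k \<le> K * V * B" if k: "k \<ge> 1" for k
    proof -
      have b: "cmod (e k) * w2 k \<le> B * K" unfolding e_def
        by (rule solc_bound[OF c0 M2 _ _ w2_pos w2_ratio[OF M2] Gw K_def k]) auto
      have "cmod (e k) * R ^ k = (cmod (e k) * w2 k) * v2 k" unfolding w2_def using v2_ge[of k] by simp
      also have "\<dots> \<le> (B * K) * V"
        by (rule mult_mono[OF b V[of k]]) (use v2_ge[of k] B0 K0 in auto)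
      finally show ?thesis by (simp add: algebra_simps)
    qed
    moreover have "cmod (e k) * R ^ k \<le> K0 * B" for k
    proof (cases "k = 0")
      case False
      then have "cmod (e k) * R ^ k \<le> K * V * B" using pos by simp
      also have "\<dots> \<le> K0 * B" unfolding K0_def using B0 K0 V1 R0 c0
        by (intro mult_right_mono) auto
      finally show ?thesis .
    next
      case True
      have e0: "c * e 0 = e 1 - G 0" using \<open>eqn G e\<close> unfolding eqn_def by (auto simp: dc_def)
      have e1: "cmod (e 1) \<le> K * V * B / R" using pos[of 1] R0 by (simp add: field_simps)
      have g0: "cmod (G 0) \<le> B" using G[rule_format, of 0] by simp
      have "cmod c * cmod (e 0) \<le> cmod (e 1) + cmod (G 0)"
        using arg_cong[OF e0, of cmod] norm_triangle_ineq4[of "e 1" "G 0"] by (simp add: norm_mult)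
      also have "\<dots> \<le> K * V * B / R + B" using e1 g0 by simp
      finally have "cmod (e 0) \<le> (K * V * B / R + B) / cmod c" using c0 by (simp add: field_simps)
      also have "\<dots> = (K * V / R + 1) / cmod c * B" by (simp add: field_simps)
      also have "\<dots> \<le> K0 * B" unfolding K0_def using B0 K0 V1 by (intro mult_right_mono) auto
      finally show ?thesis using True by simp
    qed
    ultimately show ?thesis by blast
  qed
  ultimately show ?thesis by blast
qed

lemma UNQ:
  assumes e: "eqn G e" and e': "eqn G e'" and C: "\<And>k. cmod (e k - e' k) * R ^ k \<le> C"
  shows "e = e'"
proof -
  define d where "d = (\<lambda>k. e k - e' k)"
  have d: "c * d k = dc M a d k" for k
  proof -
    have "c * d k = c * e k - c * e' k" by (simp add: d_def algebra_simps)
    also have "\<dots> = dc M a e k - dc M a e' k" using e e' unfolding eqn_def by simp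
    also have "\<dots> = dc M a d k" unfolding d_def by (rule dc_diff[symmetric])
    finally show ?thesis .
  qed
  have "d k = 0" for k
  proof (cases "M = 1")
    case True
    obtain U where U: "\<And>n. u1 n \<le> U" using u1_bdd by blast
    have "cmod (e 0 - e' 0) \<le> C" using C[of 0] by simp
    then have C0: "C \<ge> 0" using norm_ge_zero[of "e 0 - e' 0"] by linarith
    show ?thesis
    proof (rule seq1_uniq[OF c0 _ _ w1_pos w1_ratio])
      show "c * d k = of_nat (Suc k) * a ^ k * d (Suc k)" for k using d[of k] unfolding True dc1 .
      show "cmod (d k) * w1 k \<le> C * U" for k
      proof -
        have "cmod (d k) * w1 k = (cmod (d k) * R ^ k) * u1 k" unfolding w1_def by simp
        also have "\<dots> \<le> C * U" using C[of k] U[of k] u1_ge[of k] C0 unfolding d_def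
          by (intro mult_mono) auto
        finally show ?thesis .
      qed
    qed auto
  next
    case False
    then have "M \<ge> 2" using M1 by simp
    then show ?thesis using seq2_uniq[OF c0 _ c2 d] by simp
  qed
  then show ?thesis unfolding d_def by (simp add: fun_eq_iff)
qed

end


lemma summ1: fixes x :: real assumes "0 \<le> x" "x < 1"
  shows "summable (\<lambda>n. real (Suc n) * x ^ n)"
proof -
  have "summable (\<lambda>n. diffs (\<lambda>_. 1::real) n * x ^ n)"
    by (rule termdiff_converges[of x 1]) (use assms in \<open>auto intro: summable_geometric\<close>)
  then show ?thesis by (simp add: diffs_def)
qed

lemma summ2: fixes x :: real assumes "0 \<le> x" "x < 1"
  shows "summable (\<lambda>n. real (Suc n) * real (Suc (Suc n)) * x ^ n)"
proof -
  have "summable (\<lambda>n. diffs (\<lambda>n. real (Suc n)) n * x ^ n)"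
  proof (rule termdiff_converges[of x 1])
    fix y :: real assume "norm y < 1"
    then have "summable (\<lambda>n. diffs (\<lambda>_. 1::real) n * y ^ n)"
      by (intro termdiff_converges[of y 1]) (auto intro: summable_geometric)
    then show "summable (\<lambda>n. real (Suc n) * y ^ n)" by (simp add: diffs_def)
  qed (use assms in auto)
  then show ?thesis by (simp add: diffs_def mult_ac)
qed

lemma dc_reindex:
  assumes M: "M \<ge> 1" and S: "(\<lambda>n. of_nat (Suc n) * e (Suc n) * (a * z ^ M) ^ n) sums s"
  shows "(\<lambda>k. dc M a e k * z ^ k) sums s"
proof -
  have "of_nat (Suc n) * e (Suc n) * (a * z ^ M) ^ n = dc M a e (M * n) * z ^ (M * n)" for n
    using M unfolding dc_def by (simp add: power_mult_distrib power_mult algebra_simps)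
  then have "(\<lambda>n. dc M a e (M * n) * z ^ (M * n)) sums s" using S by simp
  moreover have "strict_mono (\<lambda>n::nat. M * n)" using M by (intro strict_monoI) auto
  ultimately show ?thesis
    by (subst (asm) sums_mono_reindex[where f = "\<lambda>k. dc M a e k * z ^ k"]) (auto simp: dc_def)
qed

context setting
begin

definition "S2 = (\<Sum>n. real (Suc n) * real (Suc (Suc n)) * (cmod a / R) ^ n) / R ^ 2"

lemma S2_nonneg: "S2 \<ge> 0"
proof -
  have x: "0 \<le> cmod a / R" "cmod a / R < 1" using R0 aR by auto
  have "0 \<le> (\<Sum>n. real (Suc n) * real (Suc (Suc n)) * (cmod a / R) ^ n)"
    by (rule suminf_nonneg[OF summ2[OF x]]) (use x in simp)
  then show ?thesis unfolding S2_def using R0 by simp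
qed

lemma D2B:
  assumes F: "F holomorphic_on ball 0 1" and E: "\<And>k. cmod (cf F k) * R ^ k \<le> E"
    and w: "cmod w \<le> cmod a"
  shows "cmod (deriv (deriv F) w) \<le> E * S2"
proof -
  have wb: "w \<in> ball 0 1" using w aR R1 by simp
  have "cmod (cf F 0) \<le> E" using E[of 0] by simp
  then have E0: "E \<ge> 0" using norm_ge_zero[of "cf F 0"] by linarith
  have h2: "deriv (deriv F) holomorphic_on ball 0 1"
    by (intro holomorphic_deriv F) auto
  have S: "(\<lambda>n. cf (deriv (deriv F)) n * w ^ n) sums deriv (deriv F) w" by (rule cf_ps[OF h2 wb])
  have x: "0 \<le> cmod a / R" "cmod a / R < 1" using R0 aR by auto
  have tb: "cmod (cf (deriv (deriv F)) n * w ^ n) \<le> E / R ^ 2 * (real (Suc n) * real (Suc (Suc n)) * (cmod a / R) ^ n)" for n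
  proof -
    have c2: "cf (deriv (deriv F)) n = of_nat (Suc n) * of_nat (Suc (Suc n)) * cf F (Suc (Suc n))"
      unfolding cf_deriv by (simp add: algebra_simps)
    have Eb: "cmod (cf F (Suc (Suc n))) \<le> E / R ^ Suc (Suc n)"
      using E[of "Suc (Suc n)"] R0 by (simp add: field_simps)
    have "cmod (cf (deriv (deriv F)) n * w ^ n) = real (Suc n) * real (Suc (Suc n)) * cmod (cf F (Suc (Suc n))) * cmod w ^ n"
      unfolding c2 by (simp only: norm_mult norm_power norm_of_nat)
    also have "\<dots> \<le> real (Suc n) * real (Suc (Suc n)) * (E / R ^ Suc (Suc n)) * cmod a ^ n"
      by (intro mult_mono mult_left_mono Eb power_mono w) (use E0 R0 in auto)
    also have "\<dots> = E / R ^ 2 * (real (Suc n) * real (Suc (Suc n)) * (cmod a / R) ^ n)"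
      using R0 by (simp add: field_simps power_divide power2_eq_square)
    finally show ?thesis .
  qed
  have sm: "summable (\<lambda>n. E / R ^ 2 * (real (Suc n) * real (Suc (Suc n)) * (cmod a / R) ^ n))"
    by (intro summable_mult summ2 x)
  have "cmod (deriv (deriv F) w) \<le> (\<Sum>n. E / R ^ 2 * (real (Suc n) * real (Suc (Suc n)) * (cmod a / R) ^ n))"
    using norm_suminf_le[OF tb sm] sums_unique[OF S] by simp
  also have "\<dots> = E * S2" unfolding S2_def
    using suminf_mult[OF summ2[OF x], of "E / R ^ 2"] by simp
  finally show ?thesis .
qed

end


context setting
begin

lemma a1: "cmod a < 1" using aR R1 by simp

lemma Sp_dest:
  assumes "f \<in> Sp p"
  shows "f holomorphic_on ball 0 1" "deriv f \<in> hardy p" "\<And>z. z \<notin> ball 0 1 \<Longrightarrow> f z = 0"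
  using assms unfolding Sp_def disk_fun_def by auto

lemma CE_R: "f holomorphic_on ball 0 1 \<Longrightarrow> cmod (cf f k) * R ^ k \<le> avg1 f R"
  using CE[of f R k] R0 R1 by simp

lemma avg_nonneg: "f holomorphic_on ball 0 1 \<Longrightarrow> avg1 f R \<ge> 0"
  using CE_R[of f 0] norm_ge_zero[of "cf f 0"] by (simp del: norm_ge_zero)

lemma img:
  assumes p: "p > 1" and f: "f \<in> Sp p"
  shows "(\<lambda>z. Dphi (\<lambda>z. a * z ^ M) f z - c * f z) \<in> Sp p"
proof -
  note fd = Sp_dest[OF f]
  define H where "H = (\<lambda>z. Dphi (\<lambda>z. a * z ^ M) f z - c * f z)"
  have Heq: "H z = 1 * deriv f (a * z ^ M) + (- c) * f z" if "z \<in> ball 0 1" for z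
    using that unfolding H_def Dphi_def by simp
  have Sb: "cmod (deriv (deriv f) w) \<le> avg1 f R * S2" if "cmod w \<le> cmod a" for w
    by (rule D2B[OF fd(1) CE_R[OF fd(1)] that])
  have S0: "avg1 f R * S2 \<ge> 0" using avg_nonneg[OF fd(1)] S2_nonneg by simp
  note hb = HB[OF p fd(1) a1 M1 fd(1) fd(2) Heq S0 Sb]
  have "disk_fun H" unfolding disk_fun_def using hb(1) fd(3) by (auto simp: H_def Dphi_def)
  then show ?thesis using hb(2) unfolding Sp_def H_def by auto
qed

lemma eqn_cf:
  assumes f: "f holomorphic_on ball 0 1"
  shows "eqn (cf (\<lambda>z. Dphi (\<lambda>z. a * z ^ M) f z - c * f z)) (cf f)"
proof -
  have "cf (\<lambda>z. Dphi (\<lambda>z. a * z ^ M) f z - c * f z) k = dc M a (cf f) k - c * cf f k" for k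
    by (rule coeff_D[OF f a1 M1]) (simp add: Dphi_def)
  then show ?thesis unfolding eqn_def by simp
qed

lemma cf_eq_imp_eq:
  assumes f1: "f1 \<in> Sp p" and f2: "f2 \<in> Sp p" and e: "cf f1 = cf f2"
  shows "f1 = f2"
proof
  fix z
  show "f1 z = f2 z"
  proof (cases "z \<in> ball 0 1")
    case True
    have "(\<lambda>n. cf f1 n * z ^ n) sums f1 z" by (rule cf_ps[OF Sp_dest(1)[OF f1] True])
    moreover have "(\<lambda>n. cf f1 n * z ^ n) sums f2 z" using cf_ps[OF Sp_dest(1)[OF f2] True] e by simp
    ultimately show ?thesis using sums_unique2 by blast
  next
    case False
    then show ?thesis using Sp_dest(3)[OF f1] Sp_dest(3)[OF f2] by simp
  qed
qed

lemma inj: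
  shows "inj_on (\<lambda>f z. Dphi (\<lambda>z. a * z ^ M) f z - c * f z) (Sp p)"
proof (rule inj_onI)
  fix f1 f2 assume f1: "f1 \<in> Sp p" and f2: "f2 \<in> Sp p"
    and eq: "(\<lambda>z. Dphi (\<lambda>z. a * z ^ M) f1 z - c * f1 z) = (\<lambda>z. Dphi (\<lambda>z. a * z ^ M) f2 z - c * f2 z)"
  have h1: "f1 holomorphic_on ball 0 1" and h2: "f2 holomorphic_on ball 0 1"
    using Sp_dest(1) f1 f2 by auto
  have "cf f1 = cf f2"
  proof (rule UNQ[OF eqn_cf[OF h1]])
    show "eqn (cf (\<lambda>z. Dphi (\<lambda>z. a * z ^ M) f1 z - c * f1 z)) (cf f2)"
      using eqn_cf[OF h2] eq by simp
    show "cmod (cf f1 k - cf f2 k) * R ^ k \<le> avg1 f1 R + avg1 f2 R" for k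
    proof -
      have "cmod (cf f1 k - cf f2 k) * R ^ k \<le> (cmod (cf f1 k) + cmod (cf f2 k)) * R ^ k"
        using R0 by (intro mult_right_mono norm_triangle_ineq4) auto
      also have "\<dots> \<le> avg1 f1 R + avg1 f2 R" using CE_R[OF h1, of k] CE_R[OF h2, of k]
        by (simp add: algebra_simps)
      finally show ?thesis .
    qed
  qed
  then show "f1 = f2" by (rule cf_eq_imp_eq[OF f1 f2])
qed

end


context setting
begin

lemma bound:
  assumes p: "p > 1"
  shows "\<exists>C. \<forall>f\<in>Sp p. Sp_norm p f \<le> C * Sp_norm p (\<lambda>z. Dphi (\<lambda>z. a * z ^ M) f z - c * f z)"
proof -
  obtain K0 where K0: "K0 \<ge> 0" and SQ: "\<And>G B. (\<forall>n. cmod (G n) * R ^ n \<le> B) \<Longrightarrow>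
      (\<exists>e. eqn G e \<and> (\<forall>k. cmod (e k) * R ^ k \<le> K0 * B))"
    using SEQ by blast
  define C where "C = 2 * K0 + 4 * (real M * cmod a * (2 * K0) * S2 + 1) / cmod c"
  have "Sp_norm p f \<le> C * Sp_norm p (\<lambda>z. Dphi (\<lambda>z. a * z ^ M) f z - c * f z)" if f: "f \<in> Sp p" for f
  proof -
    note fd = Sp_dest[OF f]
    define g where "g = (\<lambda>z. Dphi (\<lambda>z. a * z ^ M) f z - c * f z)"
    have g: "g \<in> Sp p" unfolding g_def by (rule img[OF p f])
    note gd = Sp_dest[OF g]
    define N where "N = Sp_norm p g"
    have Gb: "\<forall>n. cmod (cf g n) * R ^ n \<le> 2 * N"
      unfolding N_def using Sp_coeff[OF g p R0 R1] by blast
    obtain e where e1: "eqn (cf g) e" and e2: "\<And>k. cmod (e k) * R ^ k \<le> K0 * (2 * N)"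
      using SQ[OF Gb] by blast
    have ef: "eqn (cf g) (cf f)" unfolding g_def by (rule eqn_cf[OF fd(1)])
    have "cf f = e"
    proof (rule UNQ[OF ef e1])
      show "cmod (cf f k - e k) * R ^ k \<le> avg1 f R + K0 * (2 * N)" for k
      proof -
        have "cmod (cf f k - e k) * R ^ k \<le> (cmod (cf f k) + cmod (e k)) * R ^ k"
          using R0 by (intro mult_right_mono norm_triangle_ineq4) auto
        also have "\<dots> \<le> avg1 f R + K0 * (2 * N)" using CE_R[OF fd(1), of k] e2[of k]
          by (simp add: algebra_simps)
        finally show ?thesis .
      qed
    qed
    then have Eb: "cmod (cf f k) * R ^ k \<le> 2 * K0 * N" for k using e2[of k] by simp
    have N0: "N \<ge> 0" using Sp_norm_ge(1)[OF g p] N_def norm_ge_zero[of "g 0"] by linarith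
    have Heq: "f z = (1 / c) * deriv f (a * z ^ M) + (- 1 / c) * g z" if "z \<in> ball 0 1" for z
      using that c0 unfolding g_def Dphi_def by (simp add: field_simps)
    have S0: "2 * K0 * N * S2 \<ge> 0" using K0 N0 S2_nonneg by simp
    have Sb: "cmod (deriv (deriv f) w) \<le> 2 * K0 * N * S2" if "cmod w \<le> cmod a" for w
      by (rule D2B[OF fd(1) Eb that])
    note hb = HB[OF p fd(1) a1 M1 gd(1) gd(2) Heq S0 Sb]
    have hn: "hardy_norm p (deriv f) \<le> 4 * (real M * cmod a * (2 * K0) * S2 + 1) / cmod c * N"
    proof -
      have "hardy_norm p (deriv f) \<le> 4 * (cmod (1 / c) * real M * cmod a * (2 * K0 * N * S2) + cmod (- 1 / c) * hardy_norm p (deriv g))"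
        by (rule hb(3))
      also have "\<dots> \<le> 4 * (cmod (1 / c) * real M * cmod a * (2 * K0 * N * S2) + cmod (- 1 / c) * N)"
        using Sp_norm_ge(2)[OF g p] N_def by (intro mult_left_mono add_left_mono mult_left_mono) auto
      also have "\<dots> = 4 * (1 / cmod c) * (real M * cmod a * (2 * K0) * S2 + 1) * N"
        by (simp only: norm_divide norm_minus_cancel norm_one) (simp add: algebra_simps)
      also have "\<dots> = 4 * (real M * cmod a * (2 * K0) * S2 + 1) / cmod c * N"
        by simp
      finally show ?thesis .
    qed
    have f0: "cmod (f 0) \<le> 2 * K0 * N" using Eb[of 0] unfolding cf_def by simp
    have "Sp_norm p f \<le> 2 * K0 * N + 4 * (real M * cmod a * (2 * K0) * S2 + 1) / cmod c * N"
      unfolding Sp_norm_def using f0 hn by simp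
    also have "\<dots> = C * N" unfolding C_def by (simp add: algebra_simps)
    finally show ?thesis unfolding N_def g_def .
  qed
  then show ?thesis by blast
qed

end


context setting
begin

lemma surj:
  assumes p: "p > 1" and g: "g \<in> Sp p"
  shows "\<exists>f\<in>Sp p. (\<lambda>z. Dphi (\<lambda>z. a * z ^ M) f z - c * f z) = g"
proof -
  note gd = Sp_dest[OF g]
  obtain K0 where K0: "K0 \<ge> 0" and SQ: "\<And>G B. (\<forall>n. cmod (G n) * R ^ n \<le> B) \<Longrightarrow>
      (\<exists>e. eqn G e \<and> (\<forall>k. cmod (e k) * R ^ k \<le> K0 * B))"
    using SEQ by blast
  define N where "N = Sp_norm p g"
  have N0: "N \<ge> 0" using Sp_norm_ge(1)[OF g p] N_def norm_ge_zero[of "g 0"] by linarith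
  have Gb: "\<forall>n. cmod (cf g n) * R ^ n \<le> 2 * N"
    unfolding N_def using Sp_coeff[OF g p R0 R1] by blast
  define E where "E = K0 * (2 * N)"
  have E0: "E \<ge> 0" unfolding E_def using K0 N0 by simp
  obtain e where e1: "eqn (cf g) e" and e2: "\<And>k. cmod (e k) * R ^ k \<le> E"
    using SQ[OF Gb] unfolding E_def by blast
  define hc where "hc n = of_nat (Suc n) * e (Suc n)" for n
  have smh: "summable (\<lambda>n. hc n * w ^ n)" if w: "cmod w < R" for w
  proof -
    have x: "0 \<le> cmod w / R" "cmod w / R < 1" using w R0 by auto
    have bnd: "cmod (hc n * w ^ n) \<le> E / R * (real (Suc n) * (cmod w / R) ^ n)" for n
    proof -
      have eb: "cmod (e (Suc n)) \<le> E / R ^ Suc n" using e2[of "Suc n"] R0 by (simp add: field_simps)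
      have "cmod (hc n * w ^ n) = real (Suc n) * cmod (e (Suc n)) * cmod w ^ n"
        unfolding hc_def by (simp only: norm_mult norm_power norm_of_nat)
      also have "\<dots> \<le> real (Suc n) * (E / R ^ Suc n) * cmod w ^ n"
        by (intro mult_right_mono mult_left_mono eb) auto
      also have "\<dots> = E / R * (real (Suc n) * (cmod w / R) ^ n)"
        unfolding power_divide power_Suc by (simp add: divide_inverse inverse_mult_distrib ac_simps)
      finally show ?thesis .
    qed
    have sm: "summable (\<lambda>n. E / R * (real (Suc n) * (cmod w / R) ^ n))"
      by (intro summable_mult summ1 x)
    show ?thesis by (rule summable_comparison_test'[OF sm, of 0]) (rule bnd)
  qed
  define h where "h w = (\<Sum>n. hc n * w ^ n)" for w
  have hs: "(\<lambda>n. hc n * w ^ n) sums h w" if "cmod w < R" for w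
    unfolding h_def using smh[OF that] by (rule summable_sums)
  have hhol: "h holomorphic_on ball 0 R"
    by (rule power_series_holomorphic[where a = hc]) (use hs in auto)
  have wR: "cmod (a * z ^ M) < R" if "z \<in> ball 0 1" for z
    using ball_pow[OF a1 that, of M] aR by simp
  define F where "F z = (if z \<in> ball 0 1 then (h (a * z ^ M) - g z) / c else 0)" for z
  have F1: "(\<lambda>z. (h (a * z ^ M) - g z) / c) holomorphic_on ball 0 1"
  proof -
    have "(h \<circ> (\<lambda>z. a * z ^ M)) holomorphic_on ball 0 1"
      by (rule holomorphic_on_compose_gen[OF _ hhol]) (auto intro!: holomorphic_intros wR)
    then have "(\<lambda>z. h (a * z ^ M)) holomorphic_on ball 0 1" by (simp add: o_def)
    then show ?thesis using c0 by (intro holomorphic_on_divide holomorphic_on_diff gd(1) holomorphic_on_const) auto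
  qed
  have Fhol: "F holomorphic_on ball 0 1"
    by (rule holomorphic_transform[OF F1]) (simp add: F_def)
  have Fs: "(\<lambda>k. e k * z ^ k) sums F z" if z: "z \<in> ball 0 R" for z
  proof -
    have zb: "z \<in> ball 0 1" using z R1 by simp
    have "(\<lambda>n. of_nat (Suc n) * e (Suc n) * (a * z ^ M) ^ n) sums h (a * z ^ M)"
      using hs[OF wR[OF zb]] unfolding hc_def .
    then have d1: "(\<lambda>k. dc M a e k * z ^ k) sums h (a * z ^ M)" by (rule dc_reindex[OF M1])
    have d2: "(\<lambda>k. cf g k * z ^ k) sums g z" by (rule cf_ps[OF gd(1) zb])
    have "(\<lambda>k. (dc M a e k * z ^ k - cf g k * z ^ k) / c) sums ((h (a * z ^ M) - g z) / c)"
      by (intro sums_divide sums_diff d1 d2)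
    moreover have "(dc M a e k * z ^ k - cf g k * z ^ k) / c = e k * z ^ k" for k
    proof -
      have "c * e k = dc M a e k - cf g k" using e1 unfolding eqn_def by blast
      then have D: "dc M a e k = cf g k + c * e k" by (simp add: algebra_simps)
      have "dc M a e k * z ^ k - cf g k * z ^ k = c * (e k * z ^ k)" unfolding D by (simp add: algebra_simps)
      then show ?thesis using c0 by simp
    qed
    ultimately show ?thesis using zb unfolding F_def by simp
  qed
  have cfF: "cf F k = e k" for k by (rule cf_uniq[OF R0 Fs])
  have dF: "deriv F w = h w" if w: "cmod w < R" for w
  proof -
    have wb: "w \<in> ball 0 1" using w R1 by simp
    have "(\<lambda>n. cf (deriv F) n * w ^ n) sums deriv F w"
      by (rule cf_ps[OF holomorphic_deriv[OF Fhol] wb]) auto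
    moreover have "cf (deriv F) n = hc n" for n unfolding cf_deriv cfF hc_def ..
    ultimately show ?thesis using hs[OF w] sums_unique2 by simp
  qed
  have TF: "(\<lambda>z. Dphi (\<lambda>z. a * z ^ M) F z - c * F z) = g"
  proof
    fix z
    show "Dphi (\<lambda>z. a * z ^ M) F z - c * F z = g z"
    proof (cases "z \<in> ball 0 1")
      case True
      then show ?thesis using dF[OF wR[OF True]] c0 unfolding Dphi_def F_def by simp
    next
      case False
      then show ?thesis using gd(3)[OF False] unfolding Dphi_def F_def by simp
    qed
  qed
  have Heq: "F z = (1 / c) * deriv F (a * z ^ M) + (- 1 / c) * g z" if "z \<in> ball 0 1" for z
    using that dF[OF wR[OF that]] c0 unfolding F_def by (simp add: field_simps)
  have S0: "E * S2 \<ge> 0" using E0 S2_nonneg by simp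
  have Sb: "cmod (deriv (deriv F) w) \<le> E * S2" if "cmod w \<le> cmod a" for w
    by (rule D2B[OF Fhol _ that]) (use e2 cfF in simp)
  note hb = HB[OF p Fhol a1 M1 gd(1) gd(2) Heq S0 Sb]
  have "\<forall>z. z \<notin> ball 0 1 \<longrightarrow> F z = 0" by (simp add: F_def)
  then have "disk_fun F" unfolding disk_fun_def using Fhol by blast
  then have "F \<in> Sp p" unfolding Sp_def using hb(2) by blast
  then show ?thesis using TF by blast
qed

end


lemma zero_hardy: assumes "p > 1" shows "(\<lambda>z. 0) \<in> hardy p"
proof -
  have "integral_mean p (\<lambda>z. 0) r = 0" for r unfolding integral_mean_def using assms by simp
  then show ?thesis unfolding hardy_def by (auto intro: bdd_aboveI[of _ 0])
qed

lemma pw_Sp: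
  assumes p: "p > 1"
  shows "(\<lambda>z. if z \<in> ball 0 1 then z ^ n else 0) \<in> Sp p"
    and "\<And>z::complex. z \<in> ball 0 1 \<Longrightarrow> deriv (\<lambda>z::complex. if z \<in> ball 0 1 then z ^ n else 0) z = of_nat n * z ^ (n - 1)"
proof -
  define P where "P = (\<lambda>z::complex. if z \<in> ball 0 1 then z ^ n else 0)"
  have dP: "(P has_field_derivative of_nat n * z ^ (n - 1)) (at z)" if z: "z \<in> ball 0 1" for z
  proof -
    have "((\<lambda>z. z ^ n) has_field_derivative of_nat n * z ^ (n - 1)) (at z)"
      using DERIV_power[OF DERIV_ident[of "at z"], of n] by simp
    then show ?thesis by (rule has_field_derivative_transform_within_open[OF _ _ z]) (auto simp: P_def)
  qed
  have hol: "P holomorphic_on ball 0 1"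
    unfolding holomorphic_on_def using dP field_differentiable_def field_differentiable_at_within by blast
  have eq: "deriv P z = of_nat n * z ^ (n - 1)" if "z \<in> ball 0 1" for z
    using DERIV_imp_deriv[OF dP[OF that]] .
  show "\<And>z::complex. z \<in> ball 0 1 \<Longrightarrow> deriv (\<lambda>z::complex. if z \<in> ball 0 1 then z ^ n else 0) z = of_nat n * z ^ (n - 1)"
    using eq unfolding P_def by blast
  have le: "cmod (deriv P z) \<le> real n + 0 * cmod ((\<lambda>z. 0::complex) z)" if z: "z \<in> ball 0 1" for z
  proof -
    have "cmod z ^ (n - 1) \<le> 1" using z by (intro power_le_one) auto
    then have "real n * cmod z ^ (n - 1) \<le> real n * 1" by (intro mult_left_mono) auto
    then show ?thesis unfolding eq[OF z] by (simp add: norm_mult norm_power)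
  qed
  have "deriv P \<in> hardy p"
    by (rule hardy_dom(1)[OF p holomorphic_deriv[OF hol] zero_hardy[OF p] _ _ le]) auto
  moreover have "disk_fun P" unfolding disk_fun_def using hol by (auto simp: P_def)
  ultimately show "(\<lambda>z. if z \<in> ball 0 1 then z ^ n else 0) \<in> Sp p" unfolding Sp_def P_def by auto
qed

theorem theorem4p2:
  fixes p :: real and a :: complex and M :: nat
  assumes "p > 1" and "0 < cmod a" and "cmod a < 1" and "M \<ge> 1"
  shows "Dphi_spectrum p (\<lambda>z. a * z ^ M) = (if M = 2 then {0, 2 * a} else {0})"
proof -
  note p = assms(1)
  have key: "c \<in> Dphi_spectrum p (\<lambda>z. a * z ^ M) \<longleftrightarrow> c = 0 \<or> (M = 2 \<and> c = 2 * a)" for c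
  proof
    assume c: "c \<in> Dphi_spectrum p (\<lambda>z. a * z ^ M)"
    show "c = 0 \<or> (M = 2 \<and> c = 2 * a)"
    proof (rule ccontr)
      assume nc: "\<not> (c = 0 \<or> (M = 2 \<and> c = 2 * a))"
      define R where "R = (1 + cmod a) / 2"
      interpret setting a c M R
        by unfold_locales (use assms nc in \<open>auto simp: R_def\<close>)
      have "(\<lambda>f z. Dphi (\<lambda>z. a * z ^ M) f z - c * f z) ` Sp p = Sp p"
      proof
        show "(\<lambda>f z. Dphi (\<lambda>z. a * z ^ M) f z - c * f z) ` Sp p \<subseteq> Sp p" using img[OF p] by blast
        show "Sp p \<subseteq> (\<lambda>f z. Dphi (\<lambda>z. a * z ^ M) f z - c * f z) ` Sp p"
        proof
          fix g assume "g \<in> Sp p"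
          from surj[OF p this] obtain f where "f \<in> Sp p" "(\<lambda>z. Dphi (\<lambda>z. a * z ^ M) f z - c * f z) = g" by blast
          then show "g \<in> (\<lambda>f z. Dphi (\<lambda>z. a * z ^ M) f z - c * f z) ` Sp p" by blast
        qed
      qed
      then have "bij_betw (\<lambda>f z. Dphi (\<lambda>z. a * z ^ M) f z - c * f z) (Sp p) (Sp p)"
        unfolding bij_betw_def using inj by blast
      then show False using c bound[OF p] unfolding Dphi_spectrum_def by blast
    qed
  next
    assume c: "c = 0 \<or> (M = 2 \<and> c = 2 * a)"
    define n :: nat where "n = (if c = 0 then 0 else 2)"
    define P where "P = (\<lambda>z::complex. if z \<in> ball 0 1 then z ^ n else 0)"
    have PS: "P \<in> Sp p" unfolding P_def by (rule pw_Sp(1)[OF p])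
    have dP: "deriv P w = of_nat n * w ^ (n - 1)" if "w \<in> ball 0 1" for w
      unfolding P_def by (rule pw_Sp(2)[OF p that])
    have ZS: "(\<lambda>z. 0) \<in> Sp p" unfolding Sp_def disk_fun_def using zero_hardy[OF p] by auto
    have TP: "(\<lambda>z. Dphi (\<lambda>z. a * z ^ M) P z - c * P z) = (\<lambda>z. 0)"
    proof
      fix z
      show "Dphi (\<lambda>z. a * z ^ M) P z - c * P z = 0"
      proof (cases "z \<in> ball 0 1")
        case True
        have w: "a * z ^ M \<in> ball 0 1" using ball_pow[OF assms(3) True, of M] assms(3) by simp
        show ?thesis
        proof (cases "c = 0")
          case True
          then show ?thesis using dP[OF w] \<open>z \<in> ball 0 1\<close> unfolding Dphi_def n_def by simp
        next
          case False
          then have "M = 2" "c = 2 * a" using c by auto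
          then show ?thesis using dP[OF w] \<open>z \<in> ball 0 1\<close> False
            unfolding Dphi_def n_def P_def by (simp add: power2_eq_square)
        qed
      next
        case False
        then show ?thesis unfolding Dphi_def P_def by simp
      qed
    qed
    have T0: "(\<lambda>z. Dphi (\<lambda>z. a * z ^ M) (\<lambda>z. 0) z - c * 0) = (\<lambda>z. 0)"
      unfolding Dphi_def deriv_const by simp
    have "P \<noteq> (\<lambda>z. 0)"
    proof
      assume "P = (\<lambda>z. 0)"
      then have "P 0 = 0" by simp
      moreover have "P 0 = (if n = 0 then 1 else 0)" unfolding P_def by simp
      moreover have "P (1/2) = (1/2) ^ n" unfolding P_def by simp
      ultimately show False using \<open>P = (\<lambda>z. 0)\<close> by (cases "n = 0") auto
    qed
    have E: "(\<lambda>f z. Dphi (\<lambda>z. a * z ^ M) f z - c * f z) P = (\<lambda>f z. Dphi (\<lambda>z. a * z ^ M) f z - c * f z) (\<lambda>z. 0)"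
      using TP T0 by simp
    have "\<not> inj_on (\<lambda>f z. Dphi (\<lambda>z. a * z ^ M) f z - c * f z) (Sp p)"
    proof
      assume "inj_on (\<lambda>f z. Dphi (\<lambda>z. a * z ^ M) f z - c * f z) (Sp p)"
      from inj_onD[OF this E PS ZS] show False using \<open>P \<noteq> (\<lambda>z. 0)\<close> by simp
    qed
    then show "c \<in> Dphi_spectrum p (\<lambda>z. a * z ^ M)"
      unfolding Dphi_spectrum_def bij_betw_def by blast
  qed
  show ?thesis
    by (rule set_eqI) (auto simp: key)
qed


end
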